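(* Any element $z\in RF(m)$ can be written in the form $$z=\prod_{i=1}^m x_i^{\alpha_i}\prod_{1\le i\le j\le m}[x_j,x_i]^{\beta_{i,j}}\prod_{i=1}^{m-1}\prod_{j=1}^{m-1}[[\omega_{i,j},x_i],x_j]$$ with $\alpha_i,\beta_{i,j}\in\mathbb Z$ and $\omega_{i,j}\in RF(m)$ (products taken in increasing order of the indices, lexicographically for pairs).
   Context: $RF(m)$ is the reduced free group on $x_1,\dots,x_m$: the quotient of the free group by the relations that each $x_i$ commutes with every conjugate of itself. Commutators are $[g,h]=g^{-1}h^{-1}gh$. *)

theory Defs
  imports "HOL-Algebra.Group"
begin

text \<open>Concrete construction of the reduced free group RF(m) as a quotient of
  the free monoid on letters x_i^{+1}, x_i^{-1} (i < m; generators 0-indexed).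
  A letter (i, False) stands for x_i, (i, True) for its inverse.\<close>

type_synonym letter = "nat \<times> bool"

definition alph :: "nat \<Rightarrow> letter set" where
  "alph m = {(i, b). i < m}"

definition inv_word :: "letter list \<Rightarrow> letter list" where
  "inv_word w = rev (map (\<lambda>(i, b). (i, \<not> b)) w)"

definition comm_word :: "letter list \<Rightarrow> letter list \<Rightarrow> letter list" where
  "comm_word u v = inv_word u @ inv_word v @ u @ v"

text \<open>The congruence on words defining RF(m): free cancellation, and the
  relators [x_i, g^{-1} x_i g] for every word g (x_i commutes with each
  of its conjugates).\<close>
inductive rf_rel :: "nat \<Rightarrow> letter list \<Rightarrow> letter list \<Rightarrow> bool" for m where
  rf_refl: "rf_rel m w w"
| rf_sym: "rf_rel m w w' \<Longrightarrow> rf_rel m w' w"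
| rf_trans: "rf_rel m u v \<Longrightarrow> rf_rel m v w \<Longrightarrow> rf_rel m u w"
| rf_cancel: "set u \<subseteq> alph m \<Longrightarrow> set v \<subseteq> alph m \<Longrightarrow> i < m \<Longrightarrow>
    rf_rel m (u @ [(i, b), (i, \<not> b)] @ v) (u @ v)"
| rf_relator: "set u \<subseteq> alph m \<Longrightarrow> set v \<subseteq> alph m \<Longrightarrow> set g \<subseteq> alph m \<Longrightarrow> i < m \<Longrightarrow>
    rf_rel m (u @ comm_word [(i, False)] (inv_word g @ [(i, False)] @ g) @ v) (u @ v)"

definition rf_class :: "nat \<Rightarrow> letter list \<Rightarrow> letter list set" where
  "rf_class m w = {w'. rf_rel m w w'}"

definition rf_rep :: "letter list set \<Rightarrow> letter list" where
  "rf_rep A = (SOME w. w \<in> A)"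

definition RF :: "nat \<Rightarrow> letter list set monoid" where
  "RF m = \<lparr> carrier = {rf_class m w | w. set w \<subseteq> alph m},
            mult = (\<lambda>A B. rf_class m (rf_rep A @ rf_rep B)),
            one = rf_class m [] \<rparr>"

definition rf_gen :: "nat \<Rightarrow> nat \<Rightarrow> letter list set" where
  "rf_gen m i = rf_class m [(i, False)]"

definition gcomm :: "('a, 'b) monoid_scheme \<Rightarrow> 'a \<Rightarrow> 'a \<Rightarrow> 'a" where
  "gcomm G g h = inv\<^bsub>G\<^esub> g \<otimes>\<^bsub>G\<^esub> (inv\<^bsub>G\<^esub> h \<otimes>\<^bsub>G\<^esub> (g \<otimes>\<^bsub>G\<^esub> h))"

definition oprod :: "('a, 'b) monoid_scheme \<Rightarrow> ('c \<Rightarrow> 'a) \<Rightarrow> 'c list \<Rightarrow> 'a" where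
  "oprod G f xs = foldr (\<lambda>a acc. f a \<otimes>\<^bsub>G\<^esub> acc) xs \<one>\<^bsub>G\<^esub>"

end

theory Submission
  imports Defs "HOL-Algebra.Generated_Groups"
begin


lemma alph_mem[simp]: "(c \<in> alph m) = (fst c < m)"
  by (cases c) (auto simp: alph_def)

lemma set_inv_word: "set (inv_word w) = (\<lambda>(i, b). (i, \<not> b)) ` set w"
  by (simp add: inv_word_def)

lemma inv_word_alph[simp]: "(set (inv_word w) \<subseteq> alph m) = (set w \<subseteq> alph m)"
  by (auto simp: inv_word_def)

lemma inv_word_inv_word[simp]: "inv_word (inv_word w) = w"
  by (induct w) (auto simp: inv_word_def)

lemma inv_word_append[simp]: "inv_word (u @ v) = inv_word v @ inv_word u"
  by (simp add: inv_word_def)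

lemma rf_alph: "rf_rel m w w' \<Longrightarrow> (set w \<subseteq> alph m) = (set w' \<subseteq> alph m)"
  by (induct rule: rf_rel.induct) (auto simp: comm_word_def)

lemma rf_cong:
  assumes "rf_rel m u v" "set u \<subseteq> alph m" "set p \<subseteq> alph m" "set s \<subseteq> alph m"
  shows "rf_rel m (p @ u @ s) (p @ v @ s)"
  using assms
proof (induct rule: rf_rel.induct)
  case (rf_refl w)
  show ?case by (rule rf_rel.rf_refl)
next
  case (rf_sym w w')
  then show ?case using rf_alph[OF rf_sym(1)] by (auto intro: rf_rel.rf_sym)
next
  case (rf_trans u v w)
  then show ?case using rf_alph[OF rf_trans(1)] by (auto intro: rf_rel.rf_trans)
next
  case (rf_cancel u v i b)
  have "rf_rel m ((p @ u) @ [(i, b), (i, \<not> b)] @ (v @ s)) ((p @ u) @ (v @ s))"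
    by (rule rf_rel.rf_cancel) (use rf_cancel in auto)
  then show ?case by simp
next
  case (rf_relator u v g i)
  have "rf_rel m ((p @ u) @ comm_word [(i, False)] (inv_word g @ [(i, False)] @ g) @ (v @ s)) ((p @ u) @ (v @ s))"
    by (rule rf_rel.rf_relator) (use rf_relator in auto)
  then show ?case by simp
qed

lemma rf_class_eq: "rf_rel m a b \<Longrightarrow> rf_class m a = rf_class m b"
  unfolding rf_class_def by (auto intro: rf_rel.rf_trans rf_rel.rf_sym)

lemma rf_rep_rel: "rf_rel m a (rf_rep (rf_class m a))"
proof -
  have "a \<in> rf_class m a" by (simp add: rf_class_def rf_rel.rf_refl)
  then have "rf_rep (rf_class m a) \<in> rf_class m a" unfolding rf_rep_def by (rule someI)
  then show ?thesis by (simp add: rf_class_def)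
qed

lemma rf_mult_class:
  assumes "set a \<subseteq> alph m" "set b \<subseteq> alph m"
  shows "rf_class m a \<otimes>\<^bsub>RF m\<^esub> rf_class m b = rf_class m (a @ b)"
proof -
  let ?A = "rf_rep (rf_class m a)" and ?B = "rf_rep (rf_class m b)"
  have A: "rf_rel m ?A a" using rf_rep_rel[of m a] by (rule rf_rel.rf_sym)
  have B: "rf_rel m ?B b" using rf_rep_rel[of m b] by (rule rf_rel.rf_sym)
  have As: "set ?A \<subseteq> alph m" using rf_alph[OF A] assms by simp
  have Bs: "set ?B \<subseteq> alph m" using rf_alph[OF B] assms by simp
  have "rf_rel m ([] @ ?A @ ?B) ([] @ a @ ?B)" by (rule rf_cong[OF A As]) (use Bs in auto)
  moreover have "rf_rel m (a @ ?B @ []) (a @ b @ [])" by (rule rf_cong[OF B Bs]) (use assms in auto)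
  ultimately have "rf_rel m (?A @ ?B) (a @ b)" by (auto intro: rf_rel.rf_trans)
  then show ?thesis by (simp add: RF_def rf_class_eq)
qed

lemma rf_inv_cancel: "set a \<subseteq> alph m \<Longrightarrow> rf_rel m (inv_word a @ a) []"
proof (induct a)
  case Nil
  then show ?case by (simp add: inv_word_def rf_rel.rf_refl)
next
  case (Cons c a)
  obtain i b where c: "c = (i, b)" by (cases c)
  have iw: "inv_word (c # a) = inv_word a @ [(i, \<not> b)]" using c by (simp add: inv_word_def)
  have "rf_rel m (inv_word a @ [(i, \<not> b), (i, \<not> \<not> b)] @ a) (inv_word a @ a)"
    by (rule rf_rel.rf_cancel) (use Cons c in auto)
  then have "rf_rel m (inv_word (c # a) @ c # a) (inv_word a @ a)" using iw c by simp
  then show ?case using Cons by (auto intro: rf_rel.rf_trans)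
qed

lemma RF_carrier: "carrier (RF m) = {rf_class m w | w. set w \<subseteq> alph m}"
  by (simp add: RF_def)

lemma RF_one: "\<one>\<^bsub>RF m\<^esub> = rf_class m []"
  by (simp add: RF_def)

lemma RF_group: "group (RF m)"
proof (rule groupI)
  fix x y assume "x \<in> carrier (RF m)" "y \<in> carrier (RF m)"
  then obtain a b where "x = rf_class m a" "set a \<subseteq> alph m" "y = rf_class m b" "set b \<subseteq> alph m"
    by (auto simp: RF_carrier)
  then show "x \<otimes>\<^bsub>RF m\<^esub> y \<in> carrier (RF m)" unfolding RF_carrier
    by (intro CollectI exI[of _ "a @ b"]) (auto simp: rf_mult_class)
next
  show "\<one>\<^bsub>RF m\<^esub> \<in> carrier (RF m)" by (auto simp: RF_carrier RF_one)
next
  fix x y z assume "x \<in> carrier (RF m)" "y \<in> carrier (RF m)" "z \<in> carrier (RF m)"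
  then obtain a b c where "x = rf_class m a" "set a \<subseteq> alph m" "y = rf_class m b" "set b \<subseteq> alph m"
     "z = rf_class m c" "set c \<subseteq> alph m"
    by (auto simp: RF_carrier)
  then show "x \<otimes>\<^bsub>RF m\<^esub> y \<otimes>\<^bsub>RF m\<^esub> z = x \<otimes>\<^bsub>RF m\<^esub> (y \<otimes>\<^bsub>RF m\<^esub> z)"
    by (simp add: rf_mult_class)
next
  fix x assume "x \<in> carrier (RF m)"
  then obtain a where "x = rf_class m a" "set a \<subseteq> alph m" by (auto simp: RF_carrier)
  then show "\<one>\<^bsub>RF m\<^esub> \<otimes>\<^bsub>RF m\<^esub> x = x" by (simp add: RF_one rf_mult_class)
next
  fix x assume "x \<in> carrier (RF m)"
  then obtain a where x: "x = rf_class m a" "set a \<subseteq> alph m" by (auto simp: RF_carrier)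
  have "rf_class m (inv_word a) \<in> carrier (RF m)" using x unfolding RF_carrier
    by (intro CollectI exI[of _ "inv_word a"]) auto
  moreover have "rf_class m (inv_word a) \<otimes>\<^bsub>RF m\<^esub> x = \<one>\<^bsub>RF m\<^esub>"
    using x by (simp add: rf_mult_class RF_one rf_class_eq rf_inv_cancel)
  ultimately show "\<exists>y\<in>carrier (RF m). y \<otimes>\<^bsub>RF m\<^esub> x = \<one>\<^bsub>RF m\<^esub>" by blast
qed

lemma RF_inv: "set a \<subseteq> alph m \<Longrightarrow> inv\<^bsub>RF m\<^esub> (rf_class m a) = rf_class m (inv_word a)"
proof -
  assume a: "set a \<subseteq> alph m"
  have h: "rf_class m (inv_word a) \<otimes>\<^bsub>RF m\<^esub> rf_class m a = \<one>\<^bsub>RF m\<^esub>"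
    using a by (simp add: rf_mult_class RF_one rf_class_eq rf_inv_cancel)
  interpret group "RF m" by (rule RF_group)
  note h
  moreover have "rf_class m (inv_word a) \<in> carrier (RF m)" "rf_class m a \<in> carrier (RF m)"
    using a inv_word_alph[of a m] unfolding RF_carrier by blast+
  ultimately show ?thesis by (simp add: inv_equality)
qed

lemma RF_gen_carrier: "k < m \<Longrightarrow> rf_gen m k \<in> carrier (RF m)"
  by (auto simp: RF_carrier rf_gen_def)

lemma RF_generated: "carrier (RF m) = generate (RF m) (rf_gen m ` {..<m})"
proof
  interpret group "RF m" by (rule RF_group)
  show "generate (RF m) (rf_gen m ` {..<m}) \<subseteq> carrier (RF m)"
    by (rule generate_incl) (auto simp: RF_gen_carrier)
  have "set w \<subseteq> alph m \<Longrightarrow> rf_class m w \<in> generate (RF m) (rf_gen m ` {..<m})" for w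
  proof (induct w)
    case Nil
    then show ?case using generate.one[of "RF m"] by (simp add: RF_one)
  next
    case (Cons c w)
    obtain i b where c: "c = (i, b)" by (cases c)
    have i: "i < m" using Cons c by auto
    have "rf_class m [c] \<in> generate (RF m) (rf_gen m ` {..<m})"
    proof (cases b)
      case True
      have "inv\<^bsub>RF m\<^esub> (rf_gen m i) = rf_class m [c]"
        using i True c by (simp add: rf_gen_def RF_inv inv_word_def)
      then show ?thesis using generate.inv[of "rf_gen m i" "rf_gen m ` {..<m}" "RF m"] i by auto
    next
      case False
      then show ?thesis using generate.incl[of "rf_gen m i" "rf_gen m ` {..<m}" "RF m"] i c
        by (auto simp: rf_gen_def)
    qed
    moreover have "rf_class m (c # w) = rf_class m [c] \<otimes>\<^bsub>RF m\<^esub> rf_class m w"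
      using Cons by (simp add: rf_mult_class)
    ultimately show ?case using Cons generate.eng by fastforce
  qed
  then show "carrier (RF m) \<subseteq> generate (RF m) (rf_gen m ` {..<m})"
    by (auto simp: RF_carrier)
qed

lemma (in group) inv_cancel_left[simp]:
  "x \<in> carrier G \<Longrightarrow> z \<in> carrier G \<Longrightarrow> x \<otimes> (inv x \<otimes> z) = z"
  by (simp add: m_assoc[symmetric])

lemma (in group) inv_cancel_left2[simp]:
  "x \<in> carrier G \<Longrightarrow> z \<in> carrier G \<Longrightarrow> inv x \<otimes> (x \<otimes> z) = z"
  by (simp add: m_assoc[symmetric])

lemma (in group) comm_from_commutator:
  assumes "x \<in> carrier G" "y \<in> carrier G" "inv x \<otimes> (inv y \<otimes> (x \<otimes> y)) = \<one>"
  shows "x \<otimes> y = y \<otimes> x"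
proof -
  have "x \<otimes> y = y \<otimes> x \<otimes> (inv x \<otimes> (inv y \<otimes> (x \<otimes> y)))"
    using assms(1,2) by (simp add: m_assoc)
  then show ?thesis using assms by simp
qed

lemma RF_rel:
  assumes k: "k < m" and g: "g \<in> carrier (RF m)"
  shows "rf_gen m k \<otimes>\<^bsub>RF m\<^esub> (inv\<^bsub>RF m\<^esub> g \<otimes>\<^bsub>RF m\<^esub> rf_gen m k \<otimes>\<^bsub>RF m\<^esub> g)
       = (inv\<^bsub>RF m\<^esub> g \<otimes>\<^bsub>RF m\<^esub> rf_gen m k \<otimes>\<^bsub>RF m\<^esub> g) \<otimes>\<^bsub>RF m\<^esub> rf_gen m k"
proof -
  interpret group "RF m" by (rule RF_group)
  obtain w where w: "g = rf_class m w" "set w \<subseteq> alph m" using g by (auto simp: RF_carrier)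
  define Yw where "Yw = inv_word w @ [(k, False)] @ w"
  have Yws: "set Yw \<subseteq> alph m" using w k by (auto simp: Yw_def)
  have Y: "inv\<^bsub>RF m\<^esub> g \<otimes>\<^bsub>RF m\<^esub> rf_gen m k \<otimes>\<^bsub>RF m\<^esub> g = rf_class m Yw"
    using w k by (simp add: RF_inv rf_gen_def rf_mult_class Yw_def)
  have X: "rf_gen m k = rf_class m [(k, False)]" by (simp add: rf_gen_def)
  have rel: "rf_rel m ([] @ comm_word [(k, False)] (inv_word w @ [(k, False)] @ w) @ []) ([] @ [])"
    by (rule rf_rel.rf_relator) (use w k in auto)
  have cm: "inv\<^bsub>RF m\<^esub> (rf_class m [(k, False)]) \<otimes>\<^bsub>RF m\<^esub> (inv\<^bsub>RF m\<^esub> (rf_class m Yw) \<otimes>\<^bsub>RF m\<^esub>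
        (rf_class m [(k, False)] \<otimes>\<^bsub>RF m\<^esub> rf_class m Yw)) = \<one>\<^bsub>RF m\<^esub>"
    using k Yws rf_class_eq[OF rel]
    by (simp add: RF_inv rf_mult_class RF_one comm_word_def Yw_def)
  show ?thesis
    unfolding Y unfolding X
    by (rule comm_from_commutator[OF _ _ cm]) (use k Yws in \<open>auto simp: RF_carrier\<close>)
qed



definition cj :: "('a, 'b) monoid_scheme \<Rightarrow> 'a \<Rightarrow> 'a \<Rightarrow> 'a" where
  "cj G g a = inv\<^bsub>G\<^esub> g \<otimes>\<^bsub>G\<^esub> a \<otimes>\<^bsub>G\<^esub> g"

context group
begin

lemma gcomm_closed[simp]: "a \<in> carrier G \<Longrightarrow> b \<in> carrier G \<Longrightarrow> gcomm G a b \<in> carrier G"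
  by (simp add: gcomm_def)

lemma cj_closed[simp]: "g \<in> carrier G \<Longrightarrow> a \<in> carrier G \<Longrightarrow> cj G g a \<in> carrier G"
  by (simp add: cj_def)

lemma cj_eq: "g \<in> carrier G \<Longrightarrow> a \<in> carrier G \<Longrightarrow> cj G g a = a \<otimes> gcomm G a g"
  by (simp add: cj_def gcomm_def m_assoc)

lemma gcomm_mult_left: "a \<in> carrier G \<Longrightarrow> b \<in> carrier G \<Longrightarrow> c \<in> carrier G \<Longrightarrow>
  gcomm G (a \<otimes> b) c = cj G b (gcomm G a c) \<otimes> gcomm G b c"
  by (simp add: cj_def gcomm_def m_assoc inv_mult_group)

lemma gcomm_mult_right: "a \<in> carrier G \<Longrightarrow> b \<in> carrier G \<Longrightarrow> c \<in> carrier G \<Longrightarrow>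
  gcomm G a (b \<otimes> c) = gcomm G a c \<otimes> cj G c (gcomm G a b)"
  by (simp add: cj_def gcomm_def m_assoc inv_mult_group)

lemma gcomm_inv: "a \<in> carrier G \<Longrightarrow> b \<in> carrier G \<Longrightarrow> inv (gcomm G a b) = gcomm G b a"
  by (simp add: gcomm_def m_assoc inv_mult_group)

lemma swap_gcomm: "a \<in> carrier G \<Longrightarrow> b \<in> carrier G \<Longrightarrow> a \<otimes> b = b \<otimes> a \<otimes> gcomm G a b"
  by (simp add: gcomm_def m_assoc)

lemma cj_mult_g: "g \<in> carrier G \<Longrightarrow> h \<in> carrier G \<Longrightarrow> a \<in> carrier G \<Longrightarrow> cj G (g \<otimes> h) a = cj G h (cj G g a)"
  by (simp add: cj_def m_assoc inv_mult_group)

lemma cj_mult: "g \<in> carrier G \<Longrightarrow> a \<in> carrier G \<Longrightarrow> b \<in> carrier G \<Longrightarrow> cj G g (a \<otimes> b) = cj G g a \<otimes> cj G g b"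
  by (simp add: cj_def m_assoc)

lemma cj_inv: "g \<in> carrier G \<Longrightarrow> a \<in> carrier G \<Longrightarrow> cj G g (inv a) = inv (cj G g a)"
  by (simp add: cj_def m_assoc inv_mult_group)

lemma cj_one_g[simp]: "a \<in> carrier G \<Longrightarrow> cj G \<one> a = a"
  by (simp add: cj_def)

lemma cj_one[simp]: "g \<in> carrier G \<Longrightarrow> cj G g \<one> = \<one>"
  by (simp add: cj_def)

lemma gcomm_one_right[simp]: "a \<in> carrier G \<Longrightarrow> gcomm G a \<one> = \<one>"
  by (simp add: gcomm_def)

lemma gcomm_one_left[simp]: "a \<in> carrier G \<Longrightarrow> gcomm G \<one> a = \<one>"
  by (simp add: gcomm_def)

lemma gcomm_self[simp]: "a \<in> carrier G \<Longrightarrow> gcomm G a a = \<one>"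
  by (simp add: gcomm_def)

lemma gcomm_eq_one_iff: "a \<in> carrier G \<Longrightarrow> b \<in> carrier G \<Longrightarrow> (gcomm G a b = \<one>) = (a \<otimes> b = b \<otimes> a)"
proof
  assume a: "a \<in> carrier G" "b \<in> carrier G"
  assume "gcomm G a b = \<one>"
  then show "a \<otimes> b = b \<otimes> a" using swap_gcomm[OF a] a by simp
next
  assume a: "a \<in> carrier G" "b \<in> carrier G"
  assume h: "a \<otimes> b = b \<otimes> a"
  have "gcomm G a b = inv a \<otimes> (inv b \<otimes> (b \<otimes> a))" using h by (simp add: gcomm_def)
  then show "gcomm G a b = \<one>" using a by simp
qed

lemma comm_inv_right: "a \<in> carrier G \<Longrightarrow> h \<in> carrier G \<Longrightarrow> a \<otimes> h = h \<otimes> a \<Longrightarrow> a \<otimes> inv h = inv h \<otimes> a"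
  by (metis inv_closed inv_solve_left' inv_solve_right m_assoc m_closed)

lemma comm_generate:
  assumes "H \<subseteq> carrier G" "a \<in> carrier G" "\<And>h. h \<in> H \<Longrightarrow> a \<otimes> h = h \<otimes> a"
    and "g \<in> generate G H"
  shows "a \<otimes> g = g \<otimes> a"
  using assms(4)
proof (induct rule: generate.induct)
  case one
  then show ?case using assms by simp
next
  case (incl h)
  then show ?case using assms by simp
next
  case (inv h)
  then show ?case using assms comm_inv_right by auto
next
  case (eng h1 h2)
  have c: "h1 \<in> carrier G" "h2 \<in> carrier G" using eng generate_in_carrier assms(1) by auto
  have "a \<otimes> (h1 \<otimes> h2) = (a \<otimes> h1) \<otimes> h2" using c assms by (simp add: m_assoc)
  also have "\<dots> = h1 \<otimes> (a \<otimes> h2)" using c assms eng by (simp add: m_assoc)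
  also have "\<dots> = (h1 \<otimes> h2) \<otimes> a" using c assms eng by (simp add: m_assoc)
  finally show ?case .
qed

lemma cj_inv_formula:
  assumes v: "v \<in> carrier G" and y: "y \<in> carrier G"
    and c: "gcomm G (gcomm G v y) y = \<one>"
  shows "cj G (inv y) v = v \<otimes> inv (gcomm G v y)"
proof -
  let ?c = "gcomm G v y"
  have cc: "?c \<in> carrier G" using v y by simp
  have cy: "?c \<otimes> y = y \<otimes> ?c" using c gcomm_eq_one_iff[OF cc y] by simp
  have ciy: "inv ?c \<otimes> y = y \<otimes> inv ?c"
    using comm_inv_right[OF y cc cy[symmetric]] by simp
  have "(v \<otimes> inv ?c) \<otimes> y = v \<otimes> (y \<otimes> inv ?c)" using v y cc ciy by (simp add: m_assoc)
  also have "\<dots> = (v \<otimes> y) \<otimes> inv ?c" using v y cc by (simp add: m_assoc)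
  also have "\<dots> = y \<otimes> v \<otimes> ?c \<otimes> inv ?c" using swap_gcomm[OF v y] by simp
  also have "\<dots> = y \<otimes> v" using v y cc by (simp add: m_assoc)
  finally have h: "(v \<otimes> inv ?c) \<otimes> y = y \<otimes> v" .
  have "v \<otimes> inv ?c = (v \<otimes> inv ?c) \<otimes> y \<otimes> inv y" using v y cc by (simp add: m_assoc)
  also have "\<dots> = y \<otimes> v \<otimes> inv y" using h by simp
  finally show ?thesis using v y by (simp add: cj_def)
qed

lemma gcomm_inv_right_formula:
  assumes v: "v \<in> carrier G" and y: "y \<in> carrier G"
    and c: "gcomm G (gcomm G v y) y = \<one>"
  shows "gcomm G v (inv y) = inv (gcomm G v y)"
proof -
  have "gcomm G v (inv y) = inv v \<otimes> cj G (inv y) v" using v y by (simp add: gcomm_def cj_def m_assoc)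
  also have "\<dots> = inv (gcomm G v y)" using cj_inv_formula[OF assms] v y by simp
  finally show ?thesis .
qed

lemma generate_sub_subgroup:
  assumes "subgroup K G" "H \<subseteq> K" shows "generate G H \<subseteq> K"
  using generate_subgroup_incl[OF assms(2,1)] .

end



locale rfg = group G for G (structure) +
  fixes x :: "nat \<Rightarrow> 'a" and m :: nat
  assumes x_carr: "k < m \<Longrightarrow> x k \<in> carrier G"
  and rel: "k < m \<Longrightarrow> g \<in> carrier G \<Longrightarrow> x k \<otimes> (inv g \<otimes> x k \<otimes> g) = (inv g \<otimes> x k \<otimes> g) \<otimes> x k"
begin

definition S where "S = generate G (x ` {..<m})"
definition NC where "NC k = generate G {cj G g (x k) | g. g \<in> S}"

lemma xs_carr: "x ` {..<m} \<subseteq> carrier G" using x_carr by auto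

lemma S_subgroup: "subgroup S G"
  unfolding S_def by (rule generate_is_subgroup[OF xs_carr])

lemma S_carr: "S \<subseteq> carrier G"
  by (rule subgroup.subset[OF S_subgroup])

lemma S_carrI: "s \<in> S \<Longrightarrow> s \<in> carrier G" using S_carr by blast

lemma x_S: "k < m \<Longrightarrow> x k \<in> S"
  unfolding S_def by (rule generate.incl) auto

lemma S_one: "\<one> \<in> S" by (rule subgroup.one_closed[OF S_subgroup])
lemma S_mult: "a \<in> S \<Longrightarrow> b \<in> S \<Longrightarrow> a \<otimes> b \<in> S" by (rule subgroup.m_closed[OF S_subgroup])
lemma S_inv: "a \<in> S \<Longrightarrow> inv a \<in> S" by (rule subgroup.m_inv_closed[OF S_subgroup])

lemma NC_gens_carr: "k < m \<Longrightarrow> {cj G g (x k) | g. g \<in> S} \<subseteq> carrier G"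
  using x_carr S_carr by auto

lemma NC_gens_S: "k < m \<Longrightarrow> {cj G g (x k) | g. g \<in> S} \<subseteq> S"
  using x_S S_mult S_inv by (auto simp: cj_def)

lemma NC_subgroup: "k < m \<Longrightarrow> subgroup (NC k) G"
  unfolding NC_def by (rule generate_is_subgroup[OF NC_gens_carr])

lemma NC_S: "k < m \<Longrightarrow> NC k \<subseteq> S"
  unfolding NC_def by (rule generate_sub_subgroup[OF S_subgroup NC_gens_S])

lemma NC_carr: "k < m \<Longrightarrow> v \<in> NC k \<Longrightarrow> v \<in> carrier G"
  using NC_S S_carr by blast

lemma x_NC: "k < m \<Longrightarrow> x k \<in> NC k"
proof -
  assume k: "k < m"
  have "cj G \<one> (x k) = x k" using x_carr[OF k] by simp
  then have "x k \<in> {cj G g (x k) | g. g \<in> S}" using S_one by (metis (mono_tags, lifting) mem_Collect_eq)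
  then show ?thesis unfolding NC_def by (rule generate.incl)
qed

lemma NC_one: "k < m \<Longrightarrow> \<one> \<in> NC k" by (rule subgroup.one_closed[OF NC_subgroup])
lemma NC_mult: "k < m \<Longrightarrow> a \<in> NC k \<Longrightarrow> b \<in> NC k \<Longrightarrow> a \<otimes> b \<in> NC k"
  by (rule subgroup.m_closed[OF NC_subgroup])
lemma NC_inv: "k < m \<Longrightarrow> a \<in> NC k \<Longrightarrow> inv a \<in> NC k"
  by (rule subgroup.m_inv_closed[OF NC_subgroup])

lemma NC_conj:
  assumes k: "k < m" and s: "s \<in> S" and v: "v \<in> NC k"
  shows "cj G s v \<in> NC k"
  using v unfolding NC_def
proof (induct rule: generate.induct)
  case one
  have "cj G s \<one> = \<one>" using s S_carr by auto
  then show ?case by (simp add: generate.one)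
next
  case (incl h)
  then obtain g where g: "g \<in> S" "h = cj G g (x k)" by auto
  have "cj G s h = cj G (g \<otimes> s) (x k)" using g s S_carr x_carr k by (simp add: cj_mult_g subset_iff)
  then show ?case using g s S_mult by (auto intro!: generate.incl)
next
  case (inv h)
  then obtain g where g: "g \<in> S" "h = cj G g (x k)" by auto
  have "cj G s (inv h) = inv (cj G (g \<otimes> s) (x k))"
    using g s S_carr x_carr k by (simp add: cj_mult_g cj_inv subset_iff)
  then show ?case using g s S_mult by (auto intro!: generate.inv)
next
  case (eng h1 h2)
  have "h1 \<in> carrier G" "h2 \<in> carrier G"
    using eng(1,3) generate_in_carrier[OF NC_gens_carr[OF k]] by auto
  moreover have "s \<in> carrier G" using s S_carr by auto
  ultimately have "cj G s (h1 \<otimes> h2) = cj G s h1 \<otimes> cj G s h2" by (simp add: cj_mult)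
  then show ?case using generate.eng[OF eng(2) eng(4)] by simp
qed

lemma gens_comm:
  assumes k: "k < m" and g: "g \<in> carrier G" and h: "h \<in> carrier G"
  shows "cj G g (x k) \<otimes> cj G h (x k) = cj G h (x k) \<otimes> cj G g (x k)"
proof -
  let ?g' = "h \<otimes> inv g"
  have g': "?g' \<in> carrier G" using g h by simp
  have r: "x k \<otimes> cj G ?g' (x k) = cj G ?g' (x k) \<otimes> x k"
    using rel[OF k g'] by (simp add: cj_def)
  have e: "cj G g (cj G ?g' (x k)) = cj G h (x k)"
    using g h x_carr[OF k] by (simp add: cj_mult_g[symmetric] m_assoc)
  have "cj G g (x k \<otimes> cj G ?g' (x k)) = cj G g (cj G ?g' (x k) \<otimes> x k)" using r by simp
  then show ?thesis using g g' x_carr[OF k] by (simp add: cj_mult e)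
qed

lemma NC_comm:
  assumes k: "k < m" and a: "a \<in> NC k" and b: "b \<in> NC k"
  shows "a \<otimes> b = b \<otimes> a"
proof -
  let ?H = "{cj G g (x k) | g. g \<in> S}"
  have gen: "c \<otimes> b = b \<otimes> c" if c: "c \<in> ?H" for c
  proof -
    have cc: "c \<in> carrier G" using c NC_gens_carr[OF k] by auto
    have "c \<otimes> h = h \<otimes> c" if "h \<in> ?H" for h
      using c that gens_comm[OF k] S_carr by auto
    then show ?thesis using comm_generate[OF NC_gens_carr[OF k] cc] b unfolding NC_def by blast
  qed
  have "b \<otimes> a = a \<otimes> b"
    apply (rule comm_generate[OF NC_gens_carr[OF k] NC_carr[OF k b]])
     apply (rule gen[symmetric], assumption)
    using a unfolding NC_def .
  then show ?thesis by simp
qed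

lemma NC_gcomm_x: "k < m \<Longrightarrow> v \<in> NC k \<Longrightarrow> gcomm G v (x k) = \<one>"
  using NC_comm[of k v "x k"] x_NC[of k] gcomm_eq_one_iff[of v "x k"] NC_carr[of k v] x_carr[of k] by simp

lemma gcomm_into_NC:
  assumes k: "k < m" and v: "v \<in> S"
  shows "gcomm G v (x k) \<in> NC k"
proof -
  have vc: "v \<in> carrier G" using v S_carr by auto
  have "gcomm G v (x k) = inv (cj G v (x k)) \<otimes> x k"
    using vc x_carr[OF k] by (simp add: gcomm_def cj_def m_assoc inv_mult_group)
  moreover have "inv (cj G v (x k)) \<in> NC k" unfolding NC_def using v by (auto intro!: generate.inv)
  ultimately show ?thesis using x_NC[OF k] NC_mult[OF k] by auto
qed

lemma NC_gcomm_closed: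
  assumes k: "k < m" and v: "v \<in> NC k" and y: "y \<in> S"
  shows "gcomm G v y \<in> NC k"
proof -
  have "gcomm G v y = inv v \<otimes> cj G y v"
    using NC_carr[OF k v] S_carr y by (auto simp: gcomm_def cj_def m_assoc)
  then show ?thesis using NC_conj[OF k y v] NC_inv[OF k v] NC_mult[OF k] by auto
qed

lemma gcomm_gcomm_x: "k < m \<Longrightarrow> v \<in> S \<Longrightarrow> gcomm G (gcomm G v (x k)) (x k) = \<one>"
  using NC_gcomm_x gcomm_into_NC by blast

end



locale rfs = rfg +
  assumes m_pos: "0 < m"
begin

definition t where "t = x (m - 1)"
definition N where "N = NC (m - 1)"

lemma lt_m: "m - 1 < m" using m_pos by simp

lemma t_carr: "t \<in> carrier G" unfolding t_def using x_carr lt_m by simp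
lemma t_N: "t \<in> N" unfolding t_def N_def using x_NC lt_m by simp
lemma N_subgroup: "subgroup N G" unfolding N_def using NC_subgroup lt_m by simp
lemma N_S: "N \<subseteq> S" unfolding N_def using NC_S lt_m by simp
lemma N_carr: "v \<in> N \<Longrightarrow> v \<in> carrier G" using N_S S_carr by blast
lemma N_one: "\<one> \<in> N" unfolding N_def using NC_one lt_m by simp
lemma N_mult: "a \<in> N \<Longrightarrow> b \<in> N \<Longrightarrow> a \<otimes> b \<in> N" unfolding N_def using NC_mult lt_m by simp
lemma N_inv: "a \<in> N \<Longrightarrow> inv a \<in> N" unfolding N_def using NC_inv lt_m by simp
lemma N_comm: "a \<in> N \<Longrightarrow> b \<in> N \<Longrightarrow> a \<otimes> b = b \<otimes> a" unfolding N_def using NC_comm lt_m by simp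
lemma N_conj: "s \<in> S \<Longrightarrow> v \<in> N \<Longrightarrow> cj G s v \<in> N" unfolding N_def using NC_conj lt_m by simp
lemma N_gcomm_t: "v \<in> N \<Longrightarrow> gcomm G v t = \<one>" unfolding N_def t_def using NC_gcomm_x lt_m by simp
lemma N_gcomm_closed: "v \<in> N \<Longrightarrow> y \<in> S \<Longrightarrow> gcomm G v y \<in> N"
  unfolding N_def using NC_gcomm_closed lt_m by simp

lemma N_hom:
  assumes a: "a \<in> N" and b: "b \<in> N" and y: "y \<in> S"
  shows "gcomm G (a \<otimes> b) y = gcomm G a y \<otimes> gcomm G b y"
proof -
  have c: "a \<in> carrier G" "b \<in> carrier G" "y \<in> carrier G" using a b y N_carr S_carr by auto
  have g: "gcomm G a y \<in> N" using N_gcomm_closed a y by simp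
  have "cj G b (gcomm G a y) = gcomm G a y \<otimes> gcomm G (gcomm G a y) b"
    using c by (simp add: cj_eq)
  also have "gcomm G (gcomm G a y) b = \<one>"
    using N_comm[OF g b] gcomm_eq_one_iff N_carr[OF g] c by simp
  finally have "cj G b (gcomm G a y) = gcomm G a y" using c by simp
  then show ?thesis using gcomm_mult_left[OF c(1,2,3)] by simp
qed

lemma N_hom_inv:
  assumes a: "a \<in> N" and y: "y \<in> S"
  shows "gcomm G (inv a) y = inv (gcomm G a y)"
proof -
  have c: "a \<in> carrier G" "y \<in> carrier G" using a y N_carr S_carr by auto
  have "gcomm G (inv a \<otimes> a) y = gcomm G (inv a) y \<otimes> gcomm G a y"
    using N_hom[OF N_inv[OF a] a y] .
  moreover have "inv a \<otimes> a = \<one>" using c by simp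
  ultimately have e: "gcomm G (inv a) y \<otimes> gcomm G a y = \<one>" using c by simp
  show ?thesis using inv_equality[OF e] c by simp
qed

lemma N_hom_pow_nat:
  assumes a: "a \<in> N" and y: "y \<in> S"
  shows "gcomm G (a [^] (n::nat)) y = gcomm G a y [^] n"
proof (induct n)
  case 0
  then show ?case using y S_carr by auto
next
  case (Suc n)
  have an: "a [^] n \<in> N" using subgroup_int_pow_closed[OF N_subgroup a, of "int n"] unfolding int_pow_int .
  have "a [^] Suc n = a [^] n \<otimes> a" by simp
  then have "gcomm G (a [^] Suc n) y = gcomm G (a [^] n) y \<otimes> gcomm G a y"
    using N_hom[OF an a y] by simp
  then show ?case using Suc by simp
qed

lemma N_hom_pow:
  assumes a: "a \<in> N" and y: "y \<in> S"
  shows "gcomm G (a [^] (i::int)) y = gcomm G a y [^] i"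
proof (cases i rule: int_cases)
  case (nonneg n)
  show ?thesis unfolding nonneg int_pow_int by (rule N_hom_pow_nat[OF a y])
next
  case (neg n)
  have c: "a \<in> carrier G" "gcomm G a y \<in> carrier G" using a y N_carr S_carr by auto
  have an: "a [^] Suc n \<in> N"
    using subgroup_int_pow_closed[OF N_subgroup a, of "int (Suc n)"] unfolding int_pow_int .
  have "a [^] i = inv (a [^] Suc n)" using neg int_pow_neg_int[OF c(1), of "Suc n"] by simp
  moreover have "gcomm G a y [^] i = inv (gcomm G a y [^] Suc n)"
    using neg int_pow_neg_int[OF c(2), of "Suc n"] by simp
  ultimately show ?thesis using N_hom_inv[OF an y] N_hom_pow_nat[OF a y, of "Suc n"] by simp
qed

primrec F :: "nat list \<Rightarrow> 'a set" where
  "F [] = N"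
| "F (k # \<sigma>) = (\<lambda>v. gcomm G v (x k)) ` F \<sigma>"

definition V :: "nat \<Rightarrow> 'a set" where
  "V d = generate G (\<Union> {F \<sigma> | \<sigma>. length \<sigma> = d \<and> set \<sigma> \<subseteq> {..<m-1}})"

lemma F_N: "set \<sigma> \<subseteq> {..<m-1} \<Longrightarrow> F \<sigma> \<subseteq> N"
proof (induct \<sigma>)
  case Nil
  then show ?case by simp
next
  case (Cons k \<sigma>)
  then have "k < m" by auto
  then show ?case using Cons N_gcomm_closed x_S by auto
qed

lemma V_gens_N: "\<Union> {F \<sigma> | \<sigma>. length \<sigma> = d \<and> set \<sigma> \<subseteq> {..<m-1}} \<subseteq> N"
  using F_N by blast

lemma V_gens_carr: "\<Union> {F \<sigma> | \<sigma>. length \<sigma> = d \<and> set \<sigma> \<subseteq> {..<m-1}} \<subseteq> carrier G"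
  using V_gens_N N_S S_carr by blast

lemma V_subgroup: "subgroup (V d) G"
  unfolding V_def by (rule generate_is_subgroup[OF V_gens_carr])

lemma V_N: "V d \<subseteq> N"
  unfolding V_def by (rule generate_sub_subgroup[OF N_subgroup V_gens_N])

lemma V_carr: "v \<in> V d \<Longrightarrow> v \<in> carrier G" using V_N N_carr by blast
lemma V_one: "\<one> \<in> V d" by (rule subgroup.one_closed[OF V_subgroup])
lemma V_mult: "a \<in> V d \<Longrightarrow> b \<in> V d \<Longrightarrow> a \<otimes> b \<in> V d" by (rule subgroup.m_closed[OF V_subgroup])
lemma V_inv: "a \<in> V d \<Longrightarrow> inv a \<in> V d" by (rule subgroup.m_inv_closed[OF V_subgroup])
lemma V_int_pow: "a \<in> V d \<Longrightarrow> a [^] (i::int) \<in> V d"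
  by (rule subgroup_int_pow_closed[OF V_subgroup])

lemma F_V: "set \<sigma> \<subseteq> {..<m-1} \<Longrightarrow> F \<sigma> \<subseteq> V (length \<sigma>)"
  unfolding V_def by (blast intro: generate.incl)

lemma V0: "V 0 = N"
proof -
  have "\<Union> {F \<sigma> | \<sigma>. length \<sigma> = 0 \<and> set \<sigma> \<subseteq> {..<m-1}} = N" by auto
  then have "V 0 = generate G N" by (simp add: V_def)
  also have "\<dots> = N"
  proof
    show "generate G N \<subseteq> N" by (rule generate_sub_subgroup[OF N_subgroup]) simp
    show "N \<subseteq> generate G N" by (blast intro: generate.incl)
  qed
  finally show ?thesis .
qed

lemma V_gcomm_x:
  assumes v: "v \<in> V d" and k: "k < m - 1"
  shows "gcomm G v (x k) \<in> V (Suc d)"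
  using v unfolding V_def
proof (induct rule: generate.induct)
  case one
  have "gcomm G \<one> (x k) = \<one>" using x_carr k by simp
  then show ?case by (simp add: generate.one)
next
  case (incl h)
  then obtain \<sigma> where s: "h \<in> F \<sigma>" "length \<sigma> = d" "set \<sigma> \<subseteq> {..<m-1}" by auto
  then have "gcomm G h (x k) \<in> F (k # \<sigma>)" by simp
  moreover have "length (k # \<sigma>) = Suc d" "set (k # \<sigma>) \<subseteq> {..<m-1}" using s k by auto
  ultimately show ?case by (blast intro: generate.incl)
next
  case (inv h)
  then obtain \<sigma> where s: "h \<in> F \<sigma>" "length \<sigma> = d" "set \<sigma> \<subseteq> {..<m-1}" by auto
  then have hN: "h \<in> N" using F_N by blast
  have "gcomm G h (x k) \<in> F (k # \<sigma>)" using s by simp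
  moreover have "length (k # \<sigma>) = Suc d" "set (k # \<sigma>) \<subseteq> {..<m-1}" using s k by auto
  ultimately have "inv (gcomm G h (x k)) \<in> generate G (\<Union> {F \<sigma> | \<sigma>. length \<sigma> = Suc d \<and> set \<sigma> \<subseteq> {..<m-1}})"
    by (blast intro: generate.inv)
  moreover have "gcomm G (inv h) (x k) = inv (gcomm G h (x k))"
    using N_hom_inv[OF hN] x_S k by simp
  ultimately show ?case by simp
next
  case (eng h1 h2)
  have "h1 \<in> N" "h2 \<in> N" using eng(1,3) V_N unfolding V_def by auto
  then have "gcomm G (h1 \<otimes> h2) (x k) = gcomm G h1 (x k) \<otimes> gcomm G h2 (x k)"
    using N_hom x_S k by simp
  then show ?case using eng(2,4) by (simp add: generate.eng)
qed

lemma V_mono_Suc: "V (Suc d) \<subseteq> V d"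
proof (induct d)
  case 0
  show ?case using V_N V0 by simp
next
  case (Suc d)
  have "\<Union> {F \<sigma> | \<sigma>. length \<sigma> = Suc (Suc d) \<and> set \<sigma> \<subseteq> {..<m-1}} \<subseteq> V (Suc d)"
  proof
    fix v assume "v \<in> \<Union> {F \<sigma> | \<sigma>. length \<sigma> = Suc (Suc d) \<and> set \<sigma> \<subseteq> {..<m-1}}"
    then obtain \<sigma>0 where s0: "v \<in> F \<sigma>0" "length \<sigma>0 = Suc (Suc d)" "set \<sigma>0 \<subseteq> {..<m-1}"
      by auto
    then obtain k \<sigma> where "\<sigma>0 = k # \<sigma>" by (cases \<sigma>0) auto
    then have s: "v \<in> F (k # \<sigma>)" "length \<sigma> = Suc d" "set (k # \<sigma>) \<subseteq> {..<m-1}" using s0 by auto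
    then obtain w where w: "w \<in> F \<sigma>" "v = gcomm G w (x k)" by auto
    have "w \<in> V (Suc d)" using F_V[of \<sigma>] s w by auto
    then have "w \<in> V d" using Suc by auto
    then show "v \<in> V (Suc d)" using V_gcomm_x[of w d k] w s by auto
  qed
  then show ?case unfolding V_def[of "Suc (Suc d)"] by (rule generate_sub_subgroup[OF V_subgroup])
qed

lemma V_mono: "d \<le> d' \<Longrightarrow> V d' \<subseteq> V d"
  by (induct d' rule: dec_induct) (use V_mono_Suc in auto)

lemma V_gcomm_t: "v \<in> V d \<Longrightarrow> gcomm G v t = \<one>"
  using V_N N_gcomm_t by blast

lemma V_gcomm_xm: "v \<in> V d \<Longrightarrow> k < m \<Longrightarrow> gcomm G v (x k) \<in> V (Suc d)"
proof -
  assume v: "v \<in> V d" and k: "k < m"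
  show ?thesis
  proof (cases "k = m - 1")
    case True
    then show ?thesis using V_gcomm_t[OF v] V_one by (simp add: t_def)
  next
    case False
    then show ?thesis using V_gcomm_x[OF v] k by simp
  qed
qed

lemma V_conj_x: "v \<in> V d \<Longrightarrow> k < m \<Longrightarrow> cj G (x k) v \<in> V d"
proof -
  assume v: "v \<in> V d" and k: "k < m"
  have "cj G (x k) v = v \<otimes> gcomm G v (x k)" using cj_eq x_carr[OF k] V_carr[OF v] by simp
  moreover have "gcomm G v (x k) \<in> V d" using subsetD[OF V_mono_Suc V_gcomm_xm[OF v k]] .
  ultimately show ?thesis using V_mult[OF v] by simp
qed

lemma V_conj_xinv: "v \<in> V d \<Longrightarrow> k < m \<Longrightarrow> cj G (inv (x k)) v \<in> V d"
proof -
  assume v: "v \<in> V d" and k: "k < m"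
  have vS: "v \<in> S" using v V_N N_S by blast
  have "cj G (inv (x k)) v = v \<otimes> inv (gcomm G v (x k))"
    using cj_inv_formula[OF V_carr[OF v] x_carr[OF k] gcomm_gcomm_x[OF k vS]] .
  moreover have "inv (gcomm G v (x k)) \<in> V d" using V_inv[OF subsetD[OF V_mono_Suc V_gcomm_xm[OF v k]]] .
  ultimately show ?thesis using v V_mult by simp
qed

lemma V_conj_S:
  assumes s: "s \<in> S"
  shows "\<forall>v \<in> V d. cj G s v \<in> V d"
  using s unfolding S_def
proof (induct rule: generate.induct)
  case one
  then show ?case using V_carr by simp
next
  case (incl h)
  then show ?case using V_conj_x by auto
next
  case (inv h)
  then show ?case using V_conj_xinv by auto
next
  case (eng h1 h2)
  have "h1 \<in> carrier G" "h2 \<in> carrier G" using eng(1,3) S_carr unfolding S_def by auto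
  then show ?case using eng(2,4) V_carr by (simp add: cj_mult_g)
qed

lemma V_conj: "s \<in> S \<Longrightarrow> v \<in> V d \<Longrightarrow> cj G s v \<in> V d"
  using V_conj_S by blast

lemma V_gcomm_S_all:
  assumes s: "s \<in> S"
  shows "\<forall>v \<in> V d. gcomm G v s \<in> V (Suc d)"
  using s unfolding S_def
proof (induct rule: generate.induct)
  case one
  then show ?case using V_carr V_one by simp
next
  case (incl h)
  then show ?case using V_gcomm_xm by auto
next
  case (inv h)
  then obtain k where k: "k < m" "h = x k" by auto
  show ?case
  proof
    fix v assume v: "v \<in> V d"
    have vS: "v \<in> S" using v V_N N_S by blast
    have "gcomm G v (inv (x k)) = inv (gcomm G v (x k))"
      using gcomm_inv_right_formula[OF V_carr[OF v] x_carr[OF k(1)] gcomm_gcomm_x[OF k(1) vS]] .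
    then show "gcomm G v (inv h) \<in> V (Suc d)" using V_gcomm_xm[OF v k(1)] V_inv k by simp
  qed
next
  case (eng h1 h2)
  have h: "h1 \<in> S" "h2 \<in> S" using eng(1,3) unfolding S_def by auto
  show ?case
  proof
    fix v assume v: "v \<in> V d"
    have "gcomm G v (h1 \<otimes> h2) = gcomm G v h2 \<otimes> cj G h2 (gcomm G v h1)"
      using gcomm_mult_right V_carr[OF v] h S_carr by auto
    then show "gcomm G v (h1 \<otimes> h2) \<in> V (Suc d)"
      using eng(2,4) v V_conj[OF h(2)] V_mult by auto
  qed
qed

lemma V_gcomm_S: "v \<in> V d \<Longrightarrow> s \<in> S \<Longrightarrow> gcomm G v s \<in> V (Suc d)"
  using V_gcomm_S_all by blast

lemma S_gcomm_V: "v \<in> V d \<Longrightarrow> s \<in> S \<Longrightarrow> gcomm G s v \<in> V (Suc d)"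
proof -
  assume v: "v \<in> V d" and s: "s \<in> S"
  have "gcomm G s v = inv (gcomm G v s)" using gcomm_inv[of v s] V_carr[OF v] S_carrI[OF s] by simp
  then show ?thesis using V_inv[OF V_gcomm_S[OF v s]] by simp
qed

end



context group
begin

lemma oprod_Nil[simp]: "oprod G f [] = \<one>" by (simp add: oprod_def)
lemma oprod_Cons[simp]: "oprod G f (a # xs) = f a \<otimes> oprod G f xs" by (simp add: oprod_def)

lemma oprod_closed: "(\<And>q. q \<in> set xs \<Longrightarrow> f q \<in> carrier G) \<Longrightarrow> oprod G f xs \<in> carrier G"
  by (induct xs) auto

lemma oprod_subgroup:
  assumes H: "subgroup H G" shows "(\<And>q. q \<in> set xs \<Longrightarrow> f q \<in> H) \<Longrightarrow> oprod G f xs \<in> H"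
proof (induct xs)
  case Nil
  then show ?case using subgroup.one_closed[OF H] by simp
next
  case (Cons a xs)
  then show ?case using subgroup.m_closed[OF H] by simp
qed

lemma oprod_append:
  "(\<And>q. q \<in> set (xs @ ys) \<Longrightarrow> f q \<in> carrier G) \<Longrightarrow> oprod G f (xs @ ys) = oprod G f xs \<otimes> oprod G f ys"
proof (induct xs)
  case Nil
  then show ?case using oprod_closed[of ys f] by simp
next
  case (Cons a xs)
  have "f a \<in> carrier G" "oprod G f xs \<in> carrier G" "oprod G f ys \<in> carrier G"
    using Cons(2) oprod_closed[of xs f] oprod_closed[of ys f] by auto
  then show ?case using Cons by (simp add: m_assoc)
qed

lemma oprod_cong: "(\<And>q. q \<in> set xs \<Longrightarrow> f q = g q) \<Longrightarrow> oprod G f xs = oprod G g xs"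
  by (induct xs) auto

lemma oprod_ones: "(\<And>q. q \<in> set xs \<Longrightarrow> f q = \<one>) \<Longrightarrow> oprod G f xs = \<one>"
  by (induct xs) auto

lemma oprod_filter:
  assumes "\<And>q. q \<in> set xs \<Longrightarrow> f q \<in> carrier G" "\<And>q. q \<in> set xs \<Longrightarrow> \<not> P q \<Longrightarrow> f q = \<one>"
  shows "oprod G f xs = oprod G f (filter P xs)"
  using assms
proof (induct xs)
  case Nil
  then show ?case by simp
next
  case (Cons a xs)
  have "oprod G f (filter P xs) \<in> carrier G" using Cons(2) by (intro oprod_closed) auto
  then show ?case using Cons by auto
qed

lemma oprod_single:
  assumes "distinct xs" "p \<in> set xs" "\<And>q. q \<in> set xs \<Longrightarrow> q \<noteq> p \<Longrightarrow> f q = \<one>" "f p \<in> carrier G"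
  shows "oprod G f xs = f p"
proof -
  have c: "f q \<in> carrier G" if "q \<in> set xs" for q
    using assms that by (cases "q = p") auto
  have "oprod G f xs = oprod G f (filter (\<lambda>q. q = p) xs)"
    using assms c by (intro oprod_filter) auto
  moreover have "filter (\<lambda>q. q = p) xs = [p]"
    using assms(1,2) by (induct xs) (auto simp: filter_empty_conv)
  ultimately show ?thesis using assms by simp
qed

lemma oprod_mult_comm:
  assumes H: "subgroup H G" and c: "\<And>a b. a \<in> H \<Longrightarrow> b \<in> H \<Longrightarrow> a \<otimes> b = b \<otimes> a"
  shows "(\<And>q. q \<in> set xs \<Longrightarrow> f q \<in> H \<and> g q \<in> H) \<Longrightarrow>
    oprod G (\<lambda>q. f q \<otimes> g q) xs = oprod G f xs \<otimes> oprod G g xs"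
proof (induct xs)
  case Nil
  then show ?case by simp
next
  case (Cons a xs)
  have Hc: "\<And>y. y \<in> H \<Longrightarrow> y \<in> carrier G" using subgroup.subset[OF H] by blast
  have fa: "f a \<in> H" and ga: "g a \<in> H" using Cons(2) by auto
  have F: "oprod G f xs \<in> H" "oprod G g xs \<in> H"
    using Cons(2) by (auto intro!: oprod_subgroup[OF H])
  have "oprod G (\<lambda>q. f q \<otimes> g q) (a # xs) = f a \<otimes> g a \<otimes> (oprod G f xs \<otimes> oprod G g xs)"
    using Cons by simp
  also have "\<dots> = f a \<otimes> (g a \<otimes> oprod G f xs) \<otimes> oprod G g xs"
    using fa ga F Hc by (simp add: m_assoc)
  also have "g a \<otimes> oprod G f xs = oprod G f xs \<otimes> g a" using c ga F by simp
  also have "f a \<otimes> (oprod G f xs \<otimes> g a) \<otimes> oprod G g xs = (f a \<otimes> oprod G f xs) \<otimes> (g a \<otimes> oprod G g xs)"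
    using fa ga F Hc by (simp add: m_assoc)
  finally show ?case by simp
qed

end

lemma distinct_pairs: "distinct [(i, j). i \<leftarrow> xs, j \<leftarrow> ys] \<longleftrightarrow> distinct (List.product xs ys)"
  by (simp add: product_concat_map)

lemma pairs_product: "[(i, j). i \<leftarrow> xs, j \<leftarrow> ys] = List.product xs ys"
  by (simp add: product_concat_map)

context rfs
begin

lemma F_NC: "set \<sigma> \<subseteq> {..<m-1} \<Longrightarrow> k \<in> set \<sigma> \<Longrightarrow> F \<sigma> \<subseteq> NC k"
proof (induct \<sigma>)
  case Nil
  then show ?case by simp
next
  case (Cons j \<sigma>)
  have j: "j < m" using Cons by auto
  show ?case
  proof (cases "k = j")
    case True
    have "gcomm G v (x j) \<in> NC j" if "v \<in> F \<sigma>" for v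
      using gcomm_into_NC[OF j] F_N[of \<sigma>] N_S that Cons(2) by auto
    then show ?thesis using True by auto
  next
    case False
    then have "F \<sigma> \<subseteq> NC k" using Cons by auto
    moreover have "k < m" using Cons by auto
    ultimately show ?thesis using NC_gcomm_closed x_S j by auto
  qed
qed

lemma F_triv: "set \<sigma> \<subseteq> {..<m-1} \<Longrightarrow> \<not> distinct \<sigma> \<Longrightarrow> F \<sigma> \<subseteq> {\<one>}"
proof (induct \<sigma>)
  case Nil
  then show ?case by simp
next
  case (Cons j \<sigma>)
  have j: "j < m" using Cons by auto
  show ?case
  proof (cases "j \<in> set \<sigma>")
    case True
    then have "F \<sigma> \<subseteq> NC j" using F_NC Cons by auto
    then show ?thesis using NC_gcomm_x[OF j] by auto
  next
    case False
    then have "F \<sigma> \<subseteq> {\<one>}" using Cons by auto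
    then show ?thesis using x_carr[OF j] by auto
  qed
qed

lemma V_triv: "m \<le> d \<Longrightarrow> V d \<subseteq> {\<one>}"
proof -
  assume d: "m \<le> d"
  have "\<Union> {F \<sigma> | \<sigma>. length \<sigma> = d \<and> set \<sigma> \<subseteq> {..<m-1}} \<subseteq> {\<one>}"
  proof
    fix v assume "v \<in> \<Union> {F \<sigma> | \<sigma>. length \<sigma> = d \<and> set \<sigma> \<subseteq> {..<m-1}}"
    then obtain \<sigma> where s: "v \<in> F \<sigma>" "length \<sigma> = d" "set \<sigma> \<subseteq> {..<m-1}" by auto
    have "card (set \<sigma>) \<le> card {..<m-1}" using s(3) by (intro card_mono) auto
    then have "card (set \<sigma>) < length \<sigma>" using s(2) d m_pos by simp
    then have "\<not> distinct \<sigma>" using distinct_card by fastforce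
    then show "v \<in> {\<one>}" using F_triv s by auto
  qed
  then show ?thesis unfolding V_def by (rule generate_sub_subgroup[OF triv_subgroup])
qed

definition Lp where "Lp = [(i, j). i \<leftarrow> [0..<m-1], j \<leftarrow> [0..<m-1]]"
definition cterm where "cterm \<omega> = (\<lambda>(i, j). gcomm G (gcomm G (\<omega> i j) (x i)) (x j))"
definition Cf where "Cf \<omega> = oprod G (cterm \<omega>) Lp"

lemma Lp_distinct: "distinct Lp"
  unfolding Lp_def pairs_product by (simp add: distinct_product)

lemma Lp_set: "q \<in> set Lp \<Longrightarrow> \<exists>i j. q = (i, j) \<and> i < m - 1 \<and> j < m - 1"
  unfolding Lp_def by auto

lemma Lp_mem: "i < m - 1 \<Longrightarrow> j < m - 1 \<Longrightarrow> (i, j) \<in> set Lp"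
  unfolding Lp_def pairs_product by simp

lemma Cf_single:
  assumes w: "w \<in> carrier G" and ij: "i < m - 1" "j < m - 1"
  shows "Cf (\<lambda>a b. if a = i \<and> b = j then w else \<one>) = gcomm G (gcomm G w (x i)) (x j)"
proof -
  let ?\<nu> = "\<lambda>a b. if a = i \<and> b = j then w else \<one>"
  have one: "cterm ?\<nu> q = \<one>" if q: "q \<in> set Lp" "q \<noteq> (i, j)" for q
  proof -
    obtain a b where ab: "q = (a, b)" "a < m - 1" "b < m - 1" using Lp_set[OF q(1)] by auto
    then have "?\<nu> a b = \<one>" using q(2) by auto
    then show ?thesis using ab x_carr[of a] x_carr[of b] by (simp add: cterm_def)
  qed
  have c: "cterm ?\<nu> (i, j) \<in> carrier G" using w ij x_carr[of i] x_carr[of j] by (simp add: cterm_def)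
  have "Cf ?\<nu> = cterm ?\<nu> (i, j)" unfolding Cf_def
    by (rule oprod_single[where f="cterm ?\<nu>", OF Lp_distinct Lp_mem[OF ij] one c])
  then show ?thesis by (simp add: cterm_def)
qed

lemma pair_hom:
  assumes a: "a \<in> N" and b: "b \<in> N" and i: "i < m" and j: "j < m"
  shows "gcomm G (gcomm G (a \<otimes> b) (x i)) (x j) = gcomm G (gcomm G a (x i)) (x j) \<otimes> gcomm G (gcomm G b (x i)) (x j)"
  using N_hom[OF a b x_S[OF i]] N_hom[OF N_gcomm_closed[OF a x_S[OF i]] N_gcomm_closed[OF b x_S[OF i]] x_S[OF j]]
  by simp

lemma pair_inv:
  assumes a: "a \<in> N" and i: "i < m" and j: "j < m"
  shows "gcomm G (gcomm G (inv a) (x i)) (x j) = inv (gcomm G (gcomm G a (x i)) (x j))"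
  using N_hom_inv[OF a x_S[OF i]] N_hom_inv[OF N_gcomm_closed[OF a x_S[OF i]] x_S[OF j]]
  by simp

lemma cterm_V: "(\<And>i j. \<omega> i j \<in> V d) \<Longrightarrow> q \<in> set Lp \<Longrightarrow> cterm \<omega> q \<in> V (Suc (Suc d))"
  using Lp_set V_gcomm_xm by (fastforce simp: cterm_def)

lemma cterm_S: "(\<And>i j. \<omega> i j \<in> S) \<Longrightarrow> q \<in> set Lp \<Longrightarrow> cterm \<omega> q \<in> S"
proof -
  assume w: "\<And>i j. \<omega> i j \<in> S" and q: "q \<in> set Lp"
  obtain i j where ij: "q = (i, j)" "i < m - 1" "j < m - 1" using Lp_set[OF q] by auto
  have "gcomm G (gcomm G (\<omega> i j) (x i)) (x j) \<in> S"
    using w[of i j] x_S[of i] x_S[of j] ij S_mult S_inv by (simp add: gcomm_def)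
  then show ?thesis using ij by (simp add: cterm_def)
qed

lemma N_comm_sub: "a \<in> N \<Longrightarrow> b \<in> N \<Longrightarrow> a \<otimes> b = b \<otimes> a" by (rule N_comm)

lemma V_pairs:
  assumes r: "r \<in> V (Suc (Suc d))"
  shows "\<exists>\<nu>. (\<forall>i j. \<nu> i j \<in> V d) \<and> r = Cf \<nu>"
  using r unfolding V_def[of "Suc (Suc d)"]
proof (induct rule: generate.induct)
  case one
  have "Cf (\<lambda>_ _. \<one>) = \<one>" unfolding Cf_def
    by (rule oprod_ones) (use Lp_set x_carr in \<open>fastforce simp: cterm_def\<close>)
  then show ?case using V_one by (intro exI[of _ "\<lambda>_ _. \<one>"]) auto
next
  case (incl h)
  then obtain \<sigma> where s: "h \<in> F \<sigma>" "length \<sigma> = Suc (Suc d)" "set \<sigma> \<subseteq> {..<m-1}" by auto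
  then obtain j i \<sigma>' where sig: "\<sigma> = j # i # \<sigma>'" by (cases \<sigma>; cases "tl \<sigma>") auto
  obtain v where v: "v \<in> F \<sigma>'" "h = gcomm G (gcomm G v (x i)) (x j)" using s sig by auto
  have vV: "v \<in> V d" using F_V[of \<sigma>'] v s sig by auto
  have ij: "i < m - 1" "j < m - 1" using s sig by auto
  define \<nu> where "\<nu> = (\<lambda>a b. if a = i \<and> b = j then v else \<one>)"
  have "Cf \<nu> = h" unfolding \<nu>_def using Cf_single[OF V_carr[OF vV] ij] v by simp
  then show ?case using vV V_one by (intro exI[of _ \<nu>]) (auto simp: \<nu>_def)
next
  case (inv h)
  then obtain \<sigma> where s: "h \<in> F \<sigma>" "length \<sigma> = Suc (Suc d)" "set \<sigma> \<subseteq> {..<m-1}" by auto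
  then obtain j i \<sigma>' where sig: "\<sigma> = j # i # \<sigma>'" by (cases \<sigma>; cases "tl \<sigma>") auto
  obtain v where v: "v \<in> F \<sigma>'" "h = gcomm G (gcomm G v (x i)) (x j)" using s sig by auto
  have vV: "v \<in> V d" using F_V[of \<sigma>'] v s sig by auto
  have ij: "i < m - 1" "j < m - 1" using s sig by auto
  define \<nu> where "\<nu> = (\<lambda>a b. if a = i \<and> b = j then inv v else \<one>)"
  have ivV: "inv v \<in> V d" using V_inv[OF vV] .
  have "Cf \<nu> = gcomm G (gcomm G (inv v) (x i)) (x j)"
    unfolding \<nu>_def using Cf_single[OF V_carr[OF ivV] ij] by simp
  also have "\<dots> = inv h" using v pair_inv[of v i j] subsetD[OF V_N vV] ij by simp
  finally show ?case using ivV V_one by (intro exI[of _ \<nu>]) (auto simp: \<nu>_def)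
next
  case (eng h1 h2)
  obtain \<nu>1 where n1: "\<forall>i j. \<nu>1 i j \<in> V d" "h1 = Cf \<nu>1" using eng by auto
  obtain \<nu>2 where n2: "\<forall>i j. \<nu>2 i j \<in> V d" "h2 = Cf \<nu>2" using eng by auto
  define \<nu> where "\<nu> = (\<lambda>a b. \<nu>1 a b \<otimes> \<nu>2 a b)"
  have nV: "\<forall>i j. \<nu> i j \<in> V d" using n1 n2 V_mult by (simp add: \<nu>_def)
  have ct: "cterm \<nu> q = cterm \<nu>1 q \<otimes> cterm \<nu>2 q" if q: "q \<in> set Lp" for q
  proof -
    obtain i j where ij: "q = (i, j)" "i < m - 1" "j < m - 1" using Lp_set[OF q] by auto
    have "\<nu>1 i j \<in> N" "\<nu>2 i j \<in> N" using n1 n2 V_N by blast+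
    then show ?thesis using ij pair_hom[of "\<nu>1 i j" "\<nu>2 i j" i j]
      by (simp add: cterm_def \<nu>_def)
  qed
  have "Cf \<nu> = oprod G (\<lambda>q. cterm \<nu>1 q \<otimes> cterm \<nu>2 q) Lp"
    unfolding Cf_def using ct by (rule oprod_cong)
  also have "\<dots> = Cf \<nu>1 \<otimes> Cf \<nu>2" unfolding Cf_def
  proof (intro oprod_mult_comm[OF N_subgroup N_comm_sub])
    fix q assume q: "q \<in> set Lp"
    have "cterm \<nu>1 q \<in> V (Suc (Suc d))" "cterm \<nu>2 q \<in> V (Suc (Suc d))"
      using cterm_V[of \<nu>1 d q] cterm_V[of \<nu>2 d q] n1 n2 q by auto
    then show "cterm \<nu>1 q \<in> N \<and> cterm \<nu>2 q \<in> N" using V_N by blast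
  qed
  finally show ?case using nV n1 n2 by (intro exI[of _ \<nu>]) simp
qed

end



context rfs
begin

definition req :: "nat \<Rightarrow> 'a \<Rightarrow> 'a \<Rightarrow> bool" where
  "req d a b \<longleftrightarrow> (\<exists>e \<in> V d. a = b \<otimes> e)"

lemma reqI: "e \<in> V d \<Longrightarrow> a = b \<otimes> e \<Longrightarrow> req d a b"
  unfolding req_def by blast

lemma reqE: "req d a b \<Longrightarrow> (\<And>e. e \<in> V d \<Longrightarrow> a = b \<otimes> e \<Longrightarrow> P) \<Longrightarrow> P"
  unfolding req_def by blast

lemma req_refl: "b \<in> carrier G \<Longrightarrow> req d b b"
  unfolding req_def using V_one by force

lemma req_trans:
  assumes "req d a b" "req d b c" "c \<in> carrier G"
  shows "req d a c"
proof -
  obtain e where e: "e \<in> V d" "a = b \<otimes> e" using assms(1) by (auto simp: req_def)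
  obtain e' where e': "e' \<in> V d" "b = c \<otimes> e'" using assms(2) by (auto simp: req_def)
  have "a = c \<otimes> (e' \<otimes> e)" using e e' assms(3) V_carr by (simp add: m_assoc)
  then show ?thesis using V_mult e e' unfolding req_def by blast
qed

lemma req_mult:
  assumes "req d a b" "req d a' b'" "b \<in> carrier G" "b' \<in> S"
  shows "req d (a \<otimes> a') (b \<otimes> b')"
proof -
  obtain e where e: "e \<in> V d" "a = b \<otimes> e" using assms(1) by (auto simp: req_def)
  obtain e' where e': "e' \<in> V d" "a' = b' \<otimes> e'" using assms(2) by (auto simp: req_def)
  have c: "e \<in> carrier G" "e' \<in> carrier G" "b' \<in> carrier G" using e e' V_carr assms S_carr by auto
  have "a \<otimes> a' = (b \<otimes> b') \<otimes> (cj G b' e \<otimes> e')"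
    using e e' c assms(3) by (simp add: cj_def m_assoc)
  moreover have "cj G b' e \<otimes> e' \<in> V d" using V_conj[OF assms(4) e(1)] e' V_mult by blast
  ultimately show ?thesis unfolding req_def by blast
qed

lemma oprod_S: "(\<And>q. q \<in> set xs \<Longrightarrow> f q \<in> S) \<Longrightarrow> oprod G f xs \<in> S"
  by (rule oprod_subgroup[OF S_subgroup])

lemma oprod_pointwise:
  assumes "\<And>q. q \<in> set xs \<Longrightarrow> f q \<in> S \<and> g q \<in> S \<and> req d (f q) (g q)"
  shows "req d (oprod G f xs) (oprod G g xs)"
  using assms
proof (induct xs)
  case Nil
  then show ?case using req_refl by simp
next
  case (Cons a xs)
  have "req d (f a \<otimes> oprod G f xs) (g a \<otimes> oprod G g xs)"
    using Cons S_carr by (intro req_mult oprod_S) auto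
  then show ?case by simp
qed

lemma oprod_split:
  assumes "\<And>q. q \<in> set xs \<Longrightarrow> f q \<in> S \<and> g q \<in> V d"
  shows "req (Suc d) (oprod G f xs \<otimes> oprod G g xs) (oprod G (\<lambda>q. f q \<otimes> g q) xs)"
  using assms
proof (induct xs)
  case Nil
  then show ?case using req_refl by simp
next
  case (Cons a xs)
  let ?F = "oprod G f xs" and ?Gs = "oprod G g xs" and ?R = "oprod G (\<lambda>q. f q \<otimes> g q) xs"
  have fa: "f a \<in> S" and ga: "g a \<in> V d" using Cons(2) by auto
  have fS: "f q \<in> S" if "q \<in> set xs" for q using Cons(2) that by auto
  have gS: "g q \<in> S" if "q \<in> set xs" for q
    using Cons(2) that subsetD[OF N_S subsetD[OF V_N]] by auto
  have FS: "?F \<in> S" using fS by (rule oprod_S)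
  have GS: "?Gs \<in> S" using gS by (rule oprod_S)
  have RS: "?R \<in> S" using fS gS S_mult by (intro oprod_S) auto
  have c1: "f a \<in> carrier G" using fa by (rule S_carrI)
  have c2: "g a \<in> carrier G" using ga by (rule V_carr)
  have c3: "?F \<in> carrier G" using FS by (rule S_carrI)
  have c4: "?Gs \<in> carrier G" using GS by (rule S_carrI)
  have c5: "?R \<in> carrier G" using RS by (rule S_carrI)
  have IH: "req (Suc d) (?F \<otimes> ?Gs) ?R"
  proof (rule Cons(1))
    fix q assume "q \<in> set xs" then show "f q \<in> S \<and> g q \<in> V d" using Cons(2) by simp
  qed
  then obtain e where e: "e \<in> V (Suc d)" "?F \<otimes> ?Gs = ?R \<otimes> e"
    unfolding req_def by blast
  have ec: "e \<in> carrier G" using e(1) by (rule V_carr)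
  let ?c = "gcomm G ?F (g a)"
  have cV: "?c \<in> V (Suc d)" using S_gcomm_V[OF ga FS] .
  have cc: "?c \<in> carrier G" using cV by (rule V_carr)
  have s1: "?F \<otimes> g a = g a \<otimes> ?F \<otimes> ?c" using swap_gcomm[OF c3 c2] .
  have s2: "?c \<otimes> ?Gs = ?Gs \<otimes> cj G ?Gs ?c" using c4 cc by (simp add: cj_def m_assoc)
  have "(f a \<otimes> ?F) \<otimes> (g a \<otimes> ?Gs) = f a \<otimes> (?F \<otimes> g a) \<otimes> ?Gs"
    using c1 c2 c3 c4 by (simp add: m_assoc)
  also have "\<dots> = f a \<otimes> (g a \<otimes> ?F \<otimes> ?c) \<otimes> ?Gs" by (simp only: s1)
  also have "\<dots> = f a \<otimes> g a \<otimes> ?F \<otimes> (?c \<otimes> ?Gs)" using c1 c2 c3 c4 cc by (simp add: m_assoc)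
  also have "\<dots> = f a \<otimes> g a \<otimes> ?F \<otimes> (?Gs \<otimes> cj G ?Gs ?c)" by (simp only: s2)
  also have "\<dots> = f a \<otimes> g a \<otimes> (?F \<otimes> ?Gs) \<otimes> cj G ?Gs ?c"
    using c1 c2 c3 c4 cc by (simp add: m_assoc)
  also have "\<dots> = f a \<otimes> g a \<otimes> (?R \<otimes> e) \<otimes> cj G ?Gs ?c" by (simp only: e(2))
  also have "\<dots> = (f a \<otimes> g a \<otimes> ?R) \<otimes> (e \<otimes> cj G ?Gs ?c)"
    using c1 c2 c4 c5 cc ec by (simp add: m_assoc)
  finally have eq: "(f a \<otimes> ?F) \<otimes> (g a \<otimes> ?Gs) = (f a \<otimes> g a \<otimes> ?R) \<otimes> (e \<otimes> cj G ?Gs ?c)" .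
  have eV: "e \<otimes> cj G ?Gs ?c \<in> V (Suc d)" using V_mult[OF e(1) V_conj[OF GS cV]] .
  have "req (Suc d) ((f a \<otimes> ?F) \<otimes> (g a \<otimes> ?Gs)) (f a \<otimes> g a \<otimes> ?R)"
    by (rule reqI[OF eV eq])
  then show ?case by (simp only: oprod_Cons)
qed

lemma merge:
  assumes nu: "\<nu> \<in> V k" and a: "a \<in> S" and i: "i < m" and j: "j < m"
  shows "req (Suc (Suc (Suc k))) (gcomm G (gcomm G a (x i)) (x j) \<otimes> gcomm G (gcomm G \<nu> (x i)) (x j))
           (gcomm G (gcomm G (\<nu> \<otimes> a) (x i)) (x j))"
proof -
  let ?X = "x i" and ?Y = "x j"
  have XS: "?X \<in> S" and YS: "?Y \<in> S" using x_S i j by auto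
  have ac: "a \<in> carrier G" using a S_carr by auto
  have Xc: "?X \<in> carrier G" and Yc: "?Y \<in> carrier G" using XS YS S_carr by auto
  have nc: "\<nu> \<in> carrier G" using V_carr[OF nu] .
  define u where "u = gcomm G a ?X"
  define w where "w = gcomm G \<nu> ?X"
  have uS: "u \<in> S" unfolding u_def using a XS S_mult S_inv by (simp add: gcomm_def)
  have uc: "u \<in> carrier G" using uS S_carr by auto
  have wV: "w \<in> V (Suc k)" unfolding w_def using V_gcomm_S[OF nu XS] .
  have wc: "w \<in> carrier G" using V_carr[OF wV] .
  define g1 where "g1 = gcomm G w a"
  have g1V: "g1 \<in> V (Suc (Suc k))" unfolding g1_def using V_gcomm_S[OF wV a] .
  have g1V1: "g1 \<in> V (Suc k)" using g1V V_mono_Suc by blast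
  have g1c: "g1 \<in> carrier G" using V_carr[OF g1V] .
  define w' where "w' = w \<otimes> g1"
  have w'V: "w' \<in> V (Suc k)" unfolding w'_def using V_mult[OF wV g1V1] .
  have w'c: "w' \<in> carrier G" using V_carr[OF w'V] .
  have h1: "gcomm G (\<nu> \<otimes> a) ?X = w' \<otimes> u"
    using gcomm_mult_left[OF nc ac Xc] cj_eq[OF ac wc] unfolding w'_def u_def w_def g1_def by simp
  define p' where "p' = gcomm G w' ?Y"
  have p'V: "p' \<in> V (Suc (Suc k))" unfolding p'_def using V_gcomm_S[OF w'V YS] .
  have p'c: "p' \<in> carrier G" using V_carr[OF p'V] .
  define e2 where "e2 = gcomm G p' u"
  have e2V: "e2 \<in> V (Suc (Suc (Suc k)))" unfolding e2_def using V_gcomm_S[OF p'V uS] .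
  define q where "q = gcomm G u ?Y"
  have qS: "q \<in> S" unfolding q_def using uS YS S_mult S_inv by (simp add: gcomm_def)
  have qc: "q \<in> carrier G" using qS S_carr by auto
  have h3: "gcomm G (w' \<otimes> u) ?Y = p' \<otimes> e2 \<otimes> q"
    using gcomm_mult_left[OF w'c uc Yc] cj_eq[OF uc p'c] unfolding p'_def e2_def q_def by simp
  define p where "p = gcomm G w ?Y"
  have pV: "p \<in> V (Suc (Suc k))" unfolding p_def using V_gcomm_S[OF wV YS] .
  have pc: "p \<in> carrier G" using V_carr[OF pV] .
  define e1 where "e1 = gcomm G g1 ?Y"
  have e1V: "e1 \<in> V (Suc (Suc (Suc k)))" unfolding e1_def using V_gcomm_S[OF g1V YS] .
  have h5: "p' = p \<otimes> e1"
    unfolding p'_def p_def e1_def w'_def using N_hom[of w g1 ?Y] wV g1V1 V_N YS by blast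
  define E where "E = e1 \<otimes> e2"
  have EV: "E \<in> V (Suc (Suc (Suc k)))" unfolding E_def using V_mult[OF e1V e2V] .
  have Ec: "E \<in> carrier G" using V_carr[OF EV] .
  have T: "gcomm G (gcomm G (\<nu> \<otimes> a) ?X) ?Y = p \<otimes> E \<otimes> q"
    using h1 h3 h5 pc qc V_carr[OF e1V] V_carr[OF e2V] by (simp add: E_def m_assoc)
  define e where "e = cj G q (inv E) \<otimes> inv (gcomm G p q)"
  have eV: "e \<in> V (Suc (Suc (Suc k)))"
    unfolding e_def using V_mult[OF V_conj[OF qS V_inv[OF EV]] V_inv[OF V_gcomm_S[OF pV qS]]] .
  have "p \<otimes> E \<otimes> q \<otimes> e = q \<otimes> p"
    unfolding e_def using pc qc Ec by (simp add: cj_def gcomm_def m_assoc inv_mult_group)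
  then have qp: "q \<otimes> p = gcomm G (gcomm G (\<nu> \<otimes> a) ?X) ?Y \<otimes> e" using T by simp
  have "req (Suc (Suc (Suc k))) (q \<otimes> p) (gcomm G (gcomm G (\<nu> \<otimes> a) ?X) ?Y)"
    by (rule reqI[OF eV qp])
  then show ?thesis unfolding q_def u_def p_def w_def .
qed

lemma absorb_aux:
  "m \<le> k + 2 + n \<Longrightarrow> (\<And>i j. \<omega> i j \<in> S) \<Longrightarrow> r \<in> V (Suc (Suc k)) \<Longrightarrow>
    \<exists>\<omega>'. (\<forall>i j. \<omega>' i j \<in> S) \<and> Cf \<omega> \<otimes> r = Cf \<omega>'"
proof (induct n arbitrary: k \<omega> r)
  case 0
  then have "r = \<one>" using V_triv[of "Suc (Suc k)"] by auto
  moreover have "Cf \<omega> \<in> carrier G" unfolding Cf_def using cterm_S[of \<omega>] 0 S_carr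
    by (intro oprod_closed) blast
  ultimately show ?case using 0 by auto
next
  case (Suc n)
  obtain \<nu> where nu: "\<forall>i j. \<nu> i j \<in> V k" "r = Cf \<nu>" using V_pairs[OF Suc(4)] by auto
  define \<omega>2 where "\<omega>2 = (\<lambda>i j. \<nu> i j \<otimes> \<omega> i j)"
  have w2S: "\<omega>2 i j \<in> S" for i j
    unfolding \<omega>2_def using nu(1) Suc(3) V_N N_S S_mult by blast
  have r1: "req (Suc (Suc (Suc k))) (Cf \<omega> \<otimes> Cf \<nu>) (oprod G (\<lambda>q. cterm \<omega> q \<otimes> cterm \<nu> q) Lp)"
    unfolding Cf_def
    using cterm_S[of \<omega>] cterm_V[of \<nu> k] Suc(3) nu(1) by (intro oprod_split) blast
  have r2: "req (Suc (Suc (Suc k))) (oprod G (\<lambda>q. cterm \<omega> q \<otimes> cterm \<nu> q) Lp) (Cf \<omega>2)"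
    unfolding Cf_def
  proof (rule oprod_pointwise)
    fix q assume q: "q \<in> set Lp"
    obtain i j where ij: "q = (i, j)" "i < m - 1" "j < m - 1" using Lp_set[OF q] by auto
    have a: "cterm \<omega> q \<in> S" using cterm_S[of \<omega> q] Suc(3) q by blast
    have b: "cterm \<nu> q \<in> S" using cterm_V[of \<nu> k q] nu(1) q V_N N_S by blast
    have c: "cterm \<omega>2 q \<in> S" using cterm_S[of \<omega>2 q] w2S q by blast
    have "req (Suc (Suc (Suc k))) (cterm \<omega> q \<otimes> cterm \<nu> q) (cterm \<omega>2 q)"
      using merge[of "\<nu> i j" k "\<omega> i j" i j] nu(1) Suc(3) ij
      by (simp add: cterm_def \<omega>2_def)
    then show "cterm \<omega> q \<otimes> cterm \<nu> q \<in> S \<and> cterm \<omega>2 q \<in> S \<and>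
      req (Suc (Suc (Suc k))) (cterm \<omega> q \<otimes> cterm \<nu> q) (cterm \<omega>2 q)"
      using a b c S_mult by blast
  qed
  have C2c: "Cf \<omega>2 \<in> carrier G" unfolding Cf_def using cterm_S[of \<omega>2] w2S S_carr
    by (intro oprod_closed) blast
  have "req (Suc (Suc (Suc k))) (Cf \<omega> \<otimes> Cf \<nu>) (Cf \<omega>2)" using req_trans[OF r1 r2 C2c] .
  then obtain e where e: "e \<in> V (Suc (Suc (Suc k)))" "Cf \<omega> \<otimes> r = Cf \<omega>2 \<otimes> e"
    using nu(2) by (auto simp: req_def)
  obtain \<omega>3 where w3: "\<forall>i j. \<omega>3 i j \<in> S" "Cf \<omega>2 \<otimes> e = Cf \<omega>3"
    using Suc(1)[of "Suc k" \<omega>2 e] Suc(2) w2S e(1) by auto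
  then show ?case using e by auto
qed

lemma absorb:
  "(\<And>i j. \<omega> i j \<in> S) \<Longrightarrow> r \<in> V 2 \<Longrightarrow> \<exists>\<omega>'. (\<forall>i j. \<omega>' i j \<in> S) \<and> Cf \<omega> \<otimes> r = Cf \<omega>'"
  using absorb_aux[of 0 m \<omega> r] by (simp add: numeral_2_eq_2)

end



lemma upt_filter_lt: "filter (\<lambda>j. j < k) [a..<n] = [a..<min k n]"
proof (induct n)
  case 0 then show ?case by simp
next
  case (Suc n)
  show ?case
  proof (cases "n < k")
    case True
    then have "min k (Suc n) = Suc n" "min k n = n" by auto
    then show ?thesis using Suc True by auto
  next
    case False
    then have "min k (Suc n) = k" "min k n = k" by auto
    then show ?thesis using Suc False by auto
  qed
qed

lemma LL1_aux: "\<forall>i\<in>set xs. i \<le> n \<Longrightarrow>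
  filter (\<lambda>(i, j). \<not> j = n) (concat (map (\<lambda>i. map (Pair i) [i..<Suc n]) xs)) = concat (map (\<lambda>i. map (Pair i) [i..<n]) xs)"
proof (induct xs)
  case Nil then show ?case by simp
next
  case (Cons a xs)
  have "filter (\<lambda>(i, j). \<not> j = n) (map (Pair a) [a..<Suc n]) = map (Pair a) [a..<n]"
    using Cons(2) by (simp add: filter_map o_def)
  then show ?case using Cons by simp
qed

lemma LL1: "filter (\<lambda>q. \<not> (\<lambda>(i, j). j = n) q) [(i, j). i \<leftarrow> [0..<Suc n], j \<leftarrow> [i..<Suc n]] = [(i, j). i \<leftarrow> [0..<n], j \<leftarrow> [i..<n]]"
proof -
  have e: "(\<lambda>q. \<not> (\<lambda>(i, j). j = n) q) = (\<lambda>(i, j). \<not> j = n)" by auto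
  have "filter (\<lambda>(i, j). \<not> j = n) [(i, j). i \<leftarrow> [0..<Suc n], j \<leftarrow> [i..<Suc n]] = concat (map (\<lambda>i. map (Pair i) [i..<n]) [0..<Suc n])"
    using LL1_aux[of "[0..<Suc n]" n] by simp
  also have "\<dots> = [(i, j). i \<leftarrow> [0..<n], j \<leftarrow> [i..<n]]" by simp
  finally show ?thesis unfolding e .
qed

lemma LL2_aux: "\<forall>i\<in>set xs. i \<le> n \<Longrightarrow>
  filter (\<lambda>(i, j). j = n) (concat (map (\<lambda>i. map (Pair i) [i..<Suc n]) xs)) = map (\<lambda>i. (i, n)) xs"
proof (induct xs)
  case Nil then show ?case by simp
next
  case (Cons a xs)
  have "filter (\<lambda>(i, j). j = n) (map (Pair a) [a..<Suc n]) = [(a, n)]"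
    using Cons(2) by (simp add: filter_map o_def)
  then show ?case using Cons by simp
qed

lemma LL2: "filter (\<lambda>(i, j). j = n) [(i, j). i \<leftarrow> [0..<Suc n], j \<leftarrow> [i..<Suc n]] = map (\<lambda>i. (i, n)) [0..<Suc n]"
  using LL2_aux[of "[0..<Suc n]" n] by simp

lemma LL3_aux: "filter (\<lambda>(i, j). i < k \<and> j < k) (concat (map (\<lambda>i. map (Pair i) ys) xs)) =
   concat (map (\<lambda>i. map (Pair i) (filter (\<lambda>j. j < k) ys)) (filter (\<lambda>i. i < k) xs))"
  by (induct xs) (auto simp: filter_map o_def)

lemma LL3: "k \<le> n \<Longrightarrow> filter (\<lambda>(i, j). i < k \<and> j < k) [(i, j). i \<leftarrow> [0..<n], j \<leftarrow> [0..<n]] = [(i, j). i \<leftarrow> [0..<k], j \<leftarrow> [0..<k]]"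
  using LL3_aux[of k "[0..<n]" "[0..<n]"] by (simp add: upt_filter_lt min_def)

definition Aform :: "('a, 'b) monoid_scheme \<Rightarrow> (nat \<Rightarrow> 'a) \<Rightarrow> (nat \<Rightarrow> int) \<Rightarrow> nat \<Rightarrow> 'a" where
  "Aform G x \<alpha> n = oprod G (\<lambda>i. x i [^]\<^bsub>G\<^esub> \<alpha> i) [0..<n]"

definition Bform :: "('a, 'b) monoid_scheme \<Rightarrow> (nat \<Rightarrow> 'a) \<Rightarrow> (nat \<Rightarrow> nat \<Rightarrow> int) \<Rightarrow> nat \<Rightarrow> 'a" where
  "Bform G x \<beta> n = oprod G (\<lambda>(i, j). gcomm G (x j) (x i) [^]\<^bsub>G\<^esub> \<beta> i j) [(i, j). i \<leftarrow> [0..<n], j \<leftarrow> [i..<n]]"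

definition Cform :: "('a, 'b) monoid_scheme \<Rightarrow> (nat \<Rightarrow> 'a) \<Rightarrow> (nat \<Rightarrow> nat \<Rightarrow> 'a) \<Rightarrow> nat \<Rightarrow> 'a" where
  "Cform G x \<omega> n = oprod G (\<lambda>(i, j). gcomm G (gcomm G (\<omega> i j) (x i)) (x j)) [(i, j). i \<leftarrow> [0..<n - 1], j \<leftarrow> [0..<n - 1]]"

definition Form :: "('a, 'b) monoid_scheme \<Rightarrow> (nat \<Rightarrow> 'a) \<Rightarrow> nat \<Rightarrow> 'a \<Rightarrow> bool" where
  "Form G x n z \<longleftrightarrow> (\<exists>\<alpha> \<beta> \<omega>. (\<forall>i j. \<omega> i j \<in> generate G (x ` {..<n})) \<and>
     z = Aform G x \<alpha> n \<otimes>\<^bsub>G\<^esub> (Bform G x \<beta> n \<otimes>\<^bsub>G\<^esub> Cform G x \<omega> n))"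

context group
begin

lemma oprod_map: "oprod G f (map h xs) = oprod G (\<lambda>q. f (h q)) xs"
  by (induct xs) auto

end

context rfs
begin

abbreviation S' where "S' \<equiv> generate G (x ` {..<m-1})"

lemma S'_S: "S' \<subseteq> S"
  unfolding S_def by (rule mono_generate) auto

lemma S'_subgroup: "subgroup S' G"
  using x_carr by (intro generate_is_subgroup) auto

lemma S_decomp:
  assumes z: "z \<in> S"
  shows "\<exists>h n. h \<in> S' \<and> n \<in> N \<and> z = h \<otimes> n"
proof -
  define X where "X = {h \<otimes> n | h n. h \<in> S' \<and> n \<in> N}"
  have hS: "h \<in> S" if "h \<in> S'" for h using that S'_S by blast
  have hc: "h \<in> carrier G" if "h \<in> S'" for h using hS[OF that] by (rule S_carrI)
  have "subgroup X G"
  proof (rule subgroupI)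
    show "X \<subseteq> carrier G" unfolding X_def using hc N_carr by auto
    have "\<one> \<otimes> \<one> \<in> X" unfolding X_def using subgroup.one_closed[OF S'_subgroup] N_one by blast
    then show "X \<noteq> {}" by blast
  next
    fix a assume "a \<in> X"
    then obtain h n where a: "h \<in> S'" "n \<in> N" "a = h \<otimes> n" unfolding X_def by blast
    have c: "h \<in> carrier G" "n \<in> carrier G" using a hc N_carr by auto
    have "inv a = inv h \<otimes> cj G (inv h) (inv n)" using a c by (simp add: cj_def m_assoc inv_mult_group)
    moreover have "inv h \<in> S'" using subgroup.m_inv_closed[OF S'_subgroup a(1)] .
    moreover have "cj G (inv h) (inv n) \<in> N" using N_conj[OF S_inv[OF hS[OF a(1)]] N_inv[OF a(2)]] .
    ultimately show "inv a \<in> X" unfolding X_def by blast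
  next
    fix a b assume "a \<in> X" "b \<in> X"
    then obtain h n h' n' where a: "h \<in> S'" "n \<in> N" "a = h \<otimes> n" and b: "h' \<in> S'" "n' \<in> N" "b = h' \<otimes> n'"
      unfolding X_def by blast
    have c: "h \<in> carrier G" "n \<in> carrier G" "h' \<in> carrier G" "n' \<in> carrier G" using a b hc N_carr by auto
    have "a \<otimes> b = (h \<otimes> h') \<otimes> (cj G h' n \<otimes> n')" using a b c by (simp add: cj_def m_assoc)
    moreover have "h \<otimes> h' \<in> S'" using subgroup.m_closed[OF S'_subgroup a(1) b(1)] .
    moreover have "cj G h' n \<otimes> n' \<in> N" using N_mult[OF N_conj[OF hS[OF b(1)] a(2)] b(2)] .
    ultimately show "a \<otimes> b \<in> X" unfolding X_def by blast
  qed
  moreover have "x ` {..<m} \<subseteq> X"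
  proof
    fix y assume "y \<in> x ` {..<m}"
    then obtain k where k: "k < m" "y = x k" by auto
    show "y \<in> X"
    proof (cases "k < m - 1")
      case True
      have "x k \<in> S'" using True by (intro generate.incl) auto
      moreover have "y = x k \<otimes> \<one>" using k x_carr by simp
      ultimately show ?thesis unfolding X_def using N_one by blast
    next
      case False
      then have "k = m - 1" using k by auto
      then have "y = \<one> \<otimes> t" using k t_carr by (simp add: t_def)
      then show ?thesis unfolding X_def using t_N subgroup.one_closed[OF S'_subgroup] by blast
    qed
  qed
  ultimately have "S \<subseteq> X" unfolding S_def by (rule generate_sub_subgroup)
  then show ?thesis using z unfolding X_def by blast
qed

lemma tpow_N: "t [^] (a::int) \<in> N" by (rule subgroup_int_pow_closed[OF N_subgroup t_N])
lemma tpow_c: "t [^] (a::int) \<in> carrier G" using t_carr by simp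

lemma N_decomp:
  assumes n: "n \<in> N"
  shows "\<exists>(a::int) \<mu>. \<mu> \<in> V 1 \<and> n = t [^] a \<otimes> \<mu>"
  using n unfolding N_def NC_def
proof (induct rule: generate.induct)
  case one
  have "\<one> = t [^] (0::int) \<otimes> \<one>" by simp
  then show ?case using V_one by blast
next
  case (incl h)
  then obtain g where g: "g \<in> S" "h = cj G g t" by (auto simp: t_def)
  have "h = t [^] (1::int) \<otimes> gcomm G t g" using g cj_eq t_carr S_carr by auto
  moreover have "gcomm G t g \<in> V 1" using V_gcomm_S[of t 0 g] t_N V0 g by simp
  ultimately show ?case by blast
next
  case (inv h)
  then obtain g where g: "g \<in> S" "h = cj G g t" by (auto simp: t_def)
  have gc: "g \<in> carrier G" using g S_carr by auto
  have cV: "gcomm G t g \<in> V 1" using V_gcomm_S[of t 0 g] t_N V0 g by simp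
  have cN: "gcomm G t g \<in> N" using cV V_N by blast
  have "inv h = inv (gcomm G t g) \<otimes> inv t" using g cj_eq[OF gc t_carr] t_carr gc by (simp add: inv_mult_group)
  also have "\<dots> = inv t \<otimes> inv (gcomm G t g)" using N_comm[OF N_inv[OF cN] N_inv[OF t_N]] .
  also have "inv t = t [^] (- 1 :: int)" using t_carr int_pow_neg[OF t_carr, of 1] by simp
  finally have "inv h = t [^] (- 1 :: int) \<otimes> inv (gcomm G t g)" .
  then show ?case using V_inv[OF cV] by blast
next
  case (eng h1 h2)
  obtain a :: int and \<mu> where 1: "\<mu> \<in> V 1" "h1 = t [^] a \<otimes> \<mu>" using eng by blast
  obtain b :: int and \<mu>' where 2: "\<mu>' \<in> V 1" "h2 = t [^] b \<otimes> \<mu>'" using eng by blast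
  have c: "\<mu> \<in> carrier G" "\<mu>' \<in> carrier G" using 1 2 V_carr by auto
  have com: "\<mu> \<otimes> t [^] b = t [^] b \<otimes> \<mu>" using N_comm[OF _ tpow_N] 1 V_N by blast
  have "h1 \<otimes> h2 = t [^] a \<otimes> (\<mu> \<otimes> t [^] b) \<otimes> \<mu>'" using 1 2 c tpow_c by (simp add: m_assoc)
  also have "\<dots> = t [^] a \<otimes> (t [^] b \<otimes> \<mu>) \<otimes> \<mu>'" by (simp only: com)
  also have "\<dots> = t [^] (a + b) \<otimes> (\<mu> \<otimes> \<mu>')" using c tpow_c by (simp add: m_assoc int_pow_mult t_carr)
  finally show ?case using V_mult[OF 1(1) 2(1)] by blast
qed

definition Pf :: "(nat \<Rightarrow> int) \<Rightarrow> 'a" where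
  "Pf b = oprod G (\<lambda>i. gcomm G t (x i) [^] b i) [0..<m-1]"

lemma tx_V1: "i < m - 1 \<Longrightarrow> gcomm G t (x i) \<in> V 1"
  using V_gcomm_x[of t 0 i] t_N V0 by simp

lemma Pf_factor_V1: "i < m - 1 \<Longrightarrow> gcomm G t (x i) [^] (c::int) \<in> V 1"
  using V_int_pow[OF tx_V1] by blast

lemma Pf_V1: "Pf b \<in> V 1"
  unfolding Pf_def using Pf_factor_V1 by (intro oprod_subgroup[OF V_subgroup]) auto

lemma Pf_N: "Pf b \<in> N" using Pf_V1 V_N by blast

lemma Pf_add: "Pf b \<otimes> Pf b' = Pf (\<lambda>i. b i + b' i)"
proof -
  have "Pf (\<lambda>i. b i + b' i) = oprod G (\<lambda>i. gcomm G t (x i) [^] b i \<otimes> gcomm G t (x i) [^] b' i) [0..<m-1]"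
    unfolding Pf_def using x_carr t_carr by (intro oprod_cong) (simp add: int_pow_mult)
  also have "\<dots> = Pf b \<otimes> Pf b'" unfolding Pf_def
  proof (rule oprod_mult_comm[OF N_subgroup N_comm_sub])
    fix q assume "q \<in> set [0..<m-1]"
    then show "gcomm G t (x q) [^] b q \<in> N \<and> gcomm G t (x q) [^] b' q \<in> N"
      using Pf_factor_V1 V_N by auto
  qed
  finally show ?thesis by simp
qed

lemma Pf_zero: "Pf (\<lambda>_. 0) = \<one>"
  unfolding Pf_def by (rule oprod_ones) simp

lemma Pf_single:
  assumes k: "k < m - 1"
  shows "Pf (\<lambda>i. if i = k then a else 0) = gcomm G t (x k) [^] a"
proof -
  have "Pf (\<lambda>i. if i = k then a else 0) = (\<lambda>i. gcomm G t (x i) [^] (if i = k then a else 0)) k"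
    unfolding Pf_def
    by (rule oprod_single) (use k x_carr t_carr in auto)
  then show ?thesis by simp
qed

lemma gen_decomp:
  assumes v: "v \<in> N" and k: "k < m - 1"
  shows "\<exists>b r. r \<in> V 2 \<and> gcomm G v (x k) = Pf b \<otimes> r"
proof -
  obtain a \<mu> where d: "\<mu> \<in> V 1" "v = t [^] (a::int) \<otimes> \<mu>" using N_decomp[OF v] by blast
  have xS: "x k \<in> S" using x_S k by simp
  have "gcomm G v (x k) = gcomm G (t [^] a) (x k) \<otimes> gcomm G \<mu> (x k)"
    using N_hom[OF tpow_N _ xS] d V_N by blast
  also have "gcomm G (t [^] a) (x k) = gcomm G t (x k) [^] a" using N_hom_pow[OF t_N xS] .
  also have "\<dots> = Pf (\<lambda>i. if i = k then a else 0)" using Pf_single[OF k] by simp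
  finally have "gcomm G v (x k) = Pf (\<lambda>i. if i = k then a else 0) \<otimes> gcomm G \<mu> (x k)" .
  moreover have "gcomm G \<mu> (x k) \<in> V 2" using V_gcomm_x[OF d(1) k] by (simp add: numeral_2_eq_2)
  ultimately show ?thesis by blast
qed

lemma V1_decomp:
  assumes q: "q \<in> V 1"
  shows "\<exists>b r. r \<in> V 2 \<and> q = Pf b \<otimes> r"
  using q unfolding V_def[of 1]
proof (induct rule: generate.induct)
  case one
  have "\<one> = Pf (\<lambda>_. 0) \<otimes> \<one>" by (simp add: Pf_zero)
  then show ?case using V_one by blast
next
  case (incl h)
  then obtain \<sigma> where s: "h \<in> F \<sigma>" "length \<sigma> = 1" "set \<sigma> \<subseteq> {..<m-1}" by auto
  then obtain k where "\<sigma> = [k]" by (cases \<sigma>) auto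
  then have "h \<in> (\<lambda>v. gcomm G v (x k)) ` N" "k < m - 1" using s by auto
  then show ?case using gen_decomp by blast
next
  case (inv h)
  then obtain \<sigma> where s: "h \<in> F \<sigma>" "length \<sigma> = 1" "set \<sigma> \<subseteq> {..<m-1}" by auto
  then obtain k where "\<sigma> = [k]" by (cases \<sigma>) auto
  then obtain v where v: "v \<in> N" "h = gcomm G v (x k)" "k < m - 1" using s by auto
  have "inv h = gcomm G (inv v) (x k)" using N_hom_inv[OF v(1)] x_S v by simp
  then show ?case using gen_decomp[OF N_inv[OF v(1)] v(3)] by simp
next
  case (eng h1 h2)
  obtain b r where 1: "r \<in> V 2" "h1 = Pf b \<otimes> r" using eng by blast
  obtain b' r' where 2: "r' \<in> V 2" "h2 = Pf b' \<otimes> r'" using eng by blast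
  have c: "r \<in> carrier G" "r' \<in> carrier G" "Pf b \<in> carrier G" "Pf b' \<in> carrier G"
    using 1 2 V_carr Pf_N N_carr by auto
  have com: "r \<otimes> Pf b' = Pf b' \<otimes> r" using N_comm[OF _ Pf_N] 1 V_N by blast
  have "h1 \<otimes> h2 = Pf b \<otimes> (r \<otimes> Pf b') \<otimes> r'" using 1 2 c by (simp add: m_assoc)
  also have "\<dots> = Pf b \<otimes> (Pf b' \<otimes> r) \<otimes> r'" by (simp only: com)
  also have "\<dots> = (Pf b \<otimes> Pf b') \<otimes> (r \<otimes> r')" using c by (simp add: m_assoc)
  also have "\<dots> = Pf (\<lambda>i. b i + b' i) \<otimes> (r \<otimes> r')" by (simp only: Pf_add)
  finally show ?case using V_mult[OF 1(1) 2(1)] by blast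
qed

end



context rfs
begin

lemma oprod_sep:
  assumes "\<And>q. q \<in> set xs \<Longrightarrow> f q \<in> S" "\<And>q. q \<in> set xs \<Longrightarrow> P q \<Longrightarrow> f q \<in> V d"
  shows "req (Suc d) (oprod G f xs) (oprod G f (filter (\<lambda>q. \<not> P q) xs) \<otimes> oprod G f (filter P xs))"
  using assms
proof (induct xs)
  case Nil
  then show ?case using req_refl by simp
next
  case (Cons a xs)
  let ?U = "oprod G f (filter (\<lambda>q. \<not> P q) xs)" and ?W = "oprod G f (filter P xs)" and ?R = "oprod G f xs"
  have fS: "f q \<in> S" if "q \<in> set xs" for q using Cons(2) that by simp
  have fa: "f a \<in> S" using Cons(2) by simp
  have US: "?U \<in> S" using fS by (intro oprod_S) auto
  have WS: "?W \<in> S" using fS by (intro oprod_S) auto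
  have RS: "?R \<in> S" using fS by (intro oprod_S) auto
  have c: "f a \<in> carrier G" "?U \<in> carrier G" "?W \<in> carrier G" "?R \<in> carrier G"
    using fa US WS RS S_carrI by auto
  have IH: "req (Suc d) ?R (?U \<otimes> ?W)"
  proof (rule Cons(1))
    fix q assume "q \<in> set xs" then show "f q \<in> S" using Cons(2) by simp
  next
    fix q assume "q \<in> set xs" "P q" then show "f q \<in> V d" using Cons(3) by simp
  qed
  have r1: "req (Suc d) (f a \<otimes> ?R) (f a \<otimes> (?U \<otimes> ?W))"
    by (rule req_mult[OF req_refl[OF c(1)] IH c(1) S_mult[OF US WS]])
  show ?case
  proof (cases "P a")
    case True
    have faV: "f a \<in> V d" using Cons(3) True by simp
    let ?c = "gcomm G (f a) ?U"
    have cV: "?c \<in> V (Suc d)" using V_gcomm_S[OF faV US] .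
    have cc: "?c \<in> carrier G" using V_carr[OF cV] .
    have "f a \<otimes> (?U \<otimes> ?W) = (f a \<otimes> ?U) \<otimes> ?W" using c by (simp add: m_assoc)
    also have "f a \<otimes> ?U = ?U \<otimes> f a \<otimes> ?c" by (rule swap_gcomm[OF c(1) c(2)])
    also have "?U \<otimes> f a \<otimes> ?c \<otimes> ?W = (?U \<otimes> (f a \<otimes> ?W)) \<otimes> cj G ?W ?c"
      using c cc by (simp add: cj_def m_assoc)
    finally have eq: "f a \<otimes> (?U \<otimes> ?W) = (?U \<otimes> (f a \<otimes> ?W)) \<otimes> cj G ?W ?c" .
    have r2: "req (Suc d) (f a \<otimes> (?U \<otimes> ?W)) (?U \<otimes> (f a \<otimes> ?W))"
      by (rule reqI[OF V_conj[OF WS cV] eq])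
    have "?U \<otimes> (f a \<otimes> ?W) \<in> carrier G" using c by simp
    then have "req (Suc d) (f a \<otimes> ?R) (?U \<otimes> (f a \<otimes> ?W))"
      by (rule req_trans[OF r1 r2])
    moreover have "filter P (a # xs) = a # filter P xs" "filter (\<lambda>q. \<not> P q) (a # xs) = filter (\<lambda>q. \<not> P q) xs"
      using True by auto
    ultimately show ?thesis by (simp only: oprod_Cons)
  next
    case False
    have e: "f a \<otimes> (?U \<otimes> ?W) = (f a \<otimes> ?U) \<otimes> ?W" using c by (simp add: m_assoc)
    moreover have "filter P (a # xs) = filter P xs" "filter (\<lambda>q. \<not> P q) (a # xs) = a # filter (\<lambda>q. \<not> P q) xs"
      using False by auto
    ultimately show ?thesis using r1 by (simp only: oprod_Cons)
  qed
qed

lemma B_interleave: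
  fixes \<beta>' :: "nat \<Rightarrow> nat \<Rightarrow> int" and b :: "nat \<Rightarrow> int"
  defines "\<beta> \<equiv> (\<lambda>i j. if j = m - 1 then b i else \<beta>' i j)"
  shows "req 2 (Bform G x \<beta> m) (Bform G x \<beta>' (m - 1) \<otimes> Pf b)"
proof -
  obtain n where mn: "m = Suc n" using m_pos by (cases m) auto
  have mm: "m - 1 = n" using mn by simp
  define f where "f = (\<lambda>(i, j). gcomm G (x j) (x i) [^] \<beta> i j)"
  define L where "L = [(i, j). i \<leftarrow> [0..<Suc n], j \<leftarrow> [i..<Suc n]]"
  have Lset: "q \<in> set L \<Longrightarrow> \<exists>i j. q = (i, j) \<and> i \<le> j \<and> j \<le> n" for q unfolding L_def by auto
  have fS: "f q \<in> S" if qL: "q \<in> set L" for q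
  proof -
    obtain i j where ij: "q = (i, j)" "i \<le> j" "j \<le> n" using Lset[OF qL] by auto
    have "gcomm G (x j) (x i) \<in> S" using x_S[of i] x_S[of j] ij mn S_mult S_inv by (simp add: gcomm_def)
    then show ?thesis using ij subgroup_int_pow_closed[OF S_subgroup] by (simp add: f_def)
  qed
  have fV: "f q \<in> V 1" if qL: "q \<in> set L" and qP: "(\<lambda>(i, j). j = n) q" for q
  proof -
    obtain i j where ij: "q = (i, j)" "i \<le> j" "j \<le> n" using Lset[OF qL] by auto
    have jn: "j = n" using qP ij by simp
    show ?thesis
    proof (cases "i = n")
      case True
      then show ?thesis using ij jn V_one x_carr mn by (simp add: f_def)
    next
      case False
      then have "i < m - 1" using ij jn mn by simp
      moreover have "x j = t" unfolding t_def using jn mn by simp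
      ultimately show ?thesis using Pf_factor_V1 ij by (simp add: f_def)
    qed
  qed
  have r: "req 2 (oprod G f L) (oprod G f (filter (\<lambda>q. \<not> (\<lambda>(i, j). j = n) q) L) \<otimes> oprod G f (filter (\<lambda>(i, j). j = n) L))"
    using oprod_sep[of L f "\<lambda>(i, j). j = n" 1] fS fV by (simp add: numeral_2_eq_2)
  have e1: "oprod G f (filter (\<lambda>q. \<not> (\<lambda>(i, j). j = n) q) L) = Bform G x \<beta>' (m - 1)"
    unfolding L_def LL1 Bform_def f_def \<beta>_def mm by (intro oprod_cong) auto
  have "oprod G f (filter (\<lambda>(i, j). j = n) L) = oprod G (\<lambda>i. f (i, n)) [0..<Suc n]"
    unfolding L_def LL2 oprod_map by (rule refl)
  also have "\<dots> = oprod G (\<lambda>i. f (i, n)) [0..<n] \<otimes> (f (n, n) \<otimes> \<one>)"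
  proof -
    have fin: "f (i, n) \<in> carrier G" if "i \<le> n" for i
    proof -
      have "(i, n) \<in> set L" unfolding L_def using that by auto
      then show ?thesis using fS S_carr by blast
    qed
    have u: "[0..<Suc n] = [0..<n] @ [n]" by simp
    have "oprod G (\<lambda>i. f (i, n)) ([0..<n] @ [n]) = oprod G (\<lambda>i. f (i, n)) [0..<n] \<otimes> oprod G (\<lambda>i. f (i, n)) [n]"
      by (rule oprod_append) (use fin in auto)
    then show ?thesis unfolding u by simp
  qed
  also have "f (n, n) = \<one>" using x_carr mn by (simp add: f_def)
  also have "oprod G (\<lambda>i. f (i, n)) [0..<n] = Pf b"
    unfolding Pf_def f_def \<beta>_def t_def mm by (intro oprod_cong) simp
  finally have e2: "oprod G f (filter (\<lambda>(i, j). j = n) L) = Pf b" using Pf_N N_carr by simp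
  have "Bform G x \<beta> m = oprod G f L" unfolding Bform_def f_def L_def mn ..
  then show ?thesis using r e1 e2 by simp
qed

lemma C_conv:
  assumes w: "\<And>i j. \<omega> i j \<in> S"
  shows "Cform G x \<omega> (m - 1) = Cf (\<lambda>i j. if i < m - 2 \<and> j < m - 2 then \<omega> i j else \<one>)"
proof -
  let ?w = "\<lambda>i j. if i < m - 2 \<and> j < m - 2 then \<omega> i j else \<one>"
  have wS: "?w i j \<in> S" for i j using w S_one by simp
  have "Cf ?w = oprod G (cterm ?w) (filter (\<lambda>(i, j). i < m - 2 \<and> j < m - 2) Lp)"
    unfolding Cf_def
  proof (rule oprod_filter)
    fix q assume "q \<in> set Lp" then show "cterm ?w q \<in> carrier G" using cterm_S[of ?w q] wS S_carr by blast
  next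
    fix q assume q: "q \<in> set Lp" "\<not> (\<lambda>(i, j). i < m - 2 \<and> j < m - 2) q"
    obtain i j where ij: "q = (i, j)" "i < m - 1" "j < m - 1" using Lp_set[OF q(1)] by auto
    then show "cterm ?w q = \<one>" using q(2) x_carr by (auto simp: cterm_def)
  qed
  also have "filter (\<lambda>(i, j). i < m - 2 \<and> j < m - 2) Lp = [(i, j). i \<leftarrow> [0..<m - 2], j \<leftarrow> [0..<m - 2]]"
    unfolding Lp_def by (rule LL3) simp
  also have "oprod G (cterm ?w) [(i, j). i \<leftarrow> [0..<m - 2], j \<leftarrow> [0..<m - 2]] = Cform G x \<omega> (m - 1)"
  proof -
    have mm: "m - 1 - 1 = m - 2" by simp
    show ?thesis unfolding Cform_def cterm_def mm by (intro oprod_cong) auto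
  qed
  finally show ?thesis by simp
qed

end



context rfs
begin

lemma Aform_S: "Aform G x \<alpha> n \<in> S" if "n \<le> m" for n
  unfolding Aform_def using that x_S
  by (intro oprod_S subgroup_int_pow_closed[OF S_subgroup]) auto

lemma Bform_S: "Bform G x \<beta> n \<in> S" if "n \<le> m" for n
  unfolding Bform_def
proof (intro oprod_S)
  fix q assume q: "q \<in> set [(i, j). i \<leftarrow> [0..<n], j \<leftarrow> [i..<n]]"
  then obtain i j where ij: "q = (i, j)" "i < n" "j < n" by auto
  have "gcomm G (x j) (x i) \<in> S" using x_S[of i] x_S[of j] ij that S_mult S_inv by (simp add: gcomm_def)
  then show "(case q of (i, j) \<Rightarrow> gcomm G (x j) (x i) [^] \<beta> i j) \<in> S"
    using ij subgroup_int_pow_closed[OF S_subgroup] by simp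
qed

lemma Cf_S: "(\<And>i j. \<omega> i j \<in> S) \<Longrightarrow> Cf \<omega> \<in> S"
  unfolding Cf_def using cterm_S by (intro oprod_S) blast

lemma step:
  assumes IH: "\<And>h. h \<in> S' \<Longrightarrow> Form G x (m - 1) h" and z: "z \<in> S"
  shows "Form G x m z"
proof -
  obtain h n where hn: "h \<in> S'" "n \<in> N" "z = h \<otimes> n" using S_decomp[OF z] by blast
  obtain a :: int and \<mu> where am: "\<mu> \<in> V 1" "n = t [^] a \<otimes> \<mu>" using N_decomp[OF hn(2)] by blast
  obtain \<alpha>' \<beta>' \<omega>' where ih: "\<forall>i j. \<omega>' i j \<in> S'"
    "h = Aform G x \<alpha>' (m - 1) \<otimes> (Bform G x \<beta>' (m - 1) \<otimes> Cform G x \<omega>' (m - 1))"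
    using IH[OF hn(1)] unfolding Form_def by blast
  have w'S: "\<omega>' i j \<in> S" for i j using ih(1) S'_S by blast
  define \<omega>'' where "\<omega>'' = (\<lambda>i j. if i < m - 2 \<and> j < m - 2 then \<omega>' i j else \<one>)"
  have w''S: "\<omega>'' i j \<in> S" for i j using w'S S_one by (simp add: \<omega>''_def)
  define A' where "A' = Aform G x \<alpha>' (m - 1)"
  define B' where "B' = Bform G x \<beta>' (m - 1)"
  define C' where "C' = Cform G x \<omega>' (m - 1)"
  define T where "T = t [^] a"
  have C'eq: "C' = Cf \<omega>''" unfolding C'_def \<omega>''_def using C_conv[OF w'S] .
  have A'S: "A' \<in> S" unfolding A'_def by (rule Aform_S) simp
  have B'S: "B' \<in> S" unfolding B'_def by (rule Bform_S) simp
  have C'S: "C' \<in> S" unfolding C'eq using Cf_S[OF w''S] .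
  have TV0: "T \<in> V 0" unfolding T_def V0 by (rule tpow_N)
  have TS: "T \<in> S" using tpow_N N_S unfolding T_def by blast
  define Y where "Y = B' \<otimes> C'"
  have YS: "Y \<in> S" unfolding Y_def using S_mult[OF B'S C'S] .
  have cA: "A' \<in> carrier G" "B' \<in> carrier G" "C' \<in> carrier G" "T \<in> carrier G" "Y \<in> carrier G"
    using A'S B'S C'S TS YS S_carrI by auto
  have cmu: "\<mu> \<in> carrier G" using V_carr[OF am(1)] .
  define g where "g = gcomm G Y T"
  have gV: "g \<in> V 1" unfolding g_def using S_gcomm_V[OF TV0 YS] by simp
  have gc: "g \<in> carrier G" using V_carr[OF gV] .
  define q1 where "q1 = g \<otimes> \<mu>"
  have q1V: "q1 \<in> V 1" unfolding q1_def using V_mult[OF gV am(1)] .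
  have sw: "Y \<otimes> T = T \<otimes> Y \<otimes> g" unfolding g_def by (rule swap_gcomm[OF cA(5) cA(4)])
  have "z = A' \<otimes> (Y \<otimes> T) \<otimes> \<mu>"
    using hn(3) ih(2) am(2) cA cmu unfolding A'_def B'_def C'_def T_def Y_def by (simp add: m_assoc)
  also have "\<dots> = A' \<otimes> (T \<otimes> Y \<otimes> g) \<otimes> \<mu>" by (simp only: sw)
  also have "\<dots> = (A' \<otimes> T) \<otimes> (B' \<otimes> (C' \<otimes> q1))"
    using cA cmu gc unfolding Y_def q1_def by (simp add: m_assoc)
  finally have z1: "z = (A' \<otimes> T) \<otimes> (B' \<otimes> (C' \<otimes> q1))" .
  obtain b r where br: "r \<in> V 2" "q1 = Pf b \<otimes> r" using V1_decomp[OF q1V] by blast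
  define P where "P = Pf b"
  have PV: "P \<in> V 1" unfolding P_def by (rule Pf_V1)
  have PS: "P \<in> S" using PV V_N N_S by blast
  have Pc: "P \<in> carrier G" using V_carr[OF PV] .
  have rc: "r \<in> carrier G" using V_carr[OF br(1)] .
  define g2 where "g2 = gcomm G C' P"
  have g2V: "g2 \<in> V 2" unfolding g2_def using S_gcomm_V[OF PV C'S] by (simp add: numeral_2_eq_2)
  have g2c: "g2 \<in> carrier G" using V_carr[OF g2V] .
  have sw2: "C' \<otimes> P = P \<otimes> C' \<otimes> g2" unfolding g2_def by (rule swap_gcomm[OF cA(3) Pc])
  define r2 where "r2 = g2 \<otimes> r"
  have r2V: "r2 \<in> V 2" unfolding r2_def using V_mult[OF g2V br(1)] .
  have r2c: "r2 \<in> carrier G" using V_carr[OF r2V] .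
  have "B' \<otimes> (C' \<otimes> q1) = B' \<otimes> (C' \<otimes> P) \<otimes> r" using br(2) cA Pc rc unfolding P_def by (simp add: m_assoc)
  also have "\<dots> = B' \<otimes> (P \<otimes> C' \<otimes> g2) \<otimes> r" by (simp only: sw2)
  also have "\<dots> = (B' \<otimes> P) \<otimes> (C' \<otimes> r2)" using cA Pc rc g2c unfolding r2_def by (simp add: m_assoc)
  finally have z2: "B' \<otimes> (C' \<otimes> q1) = (B' \<otimes> P) \<otimes> (C' \<otimes> r2)" .
  define \<beta> where "\<beta> = (\<lambda>i j. if j = m - 1 then b i else \<beta>' i j)"
  define Bm where "Bm = Bform G x \<beta> m"
  have Bmc: "Bm \<in> carrier G" unfolding Bm_def using Bform_S[of m \<beta>] S_carrI by simp
  have "req 2 Bm (B' \<otimes> P)" unfolding Bm_def B'_def P_def \<beta>_def by (rule B_interleave)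
  then obtain e where e: "e \<in> V 2" "Bm = (B' \<otimes> P) \<otimes> e" by (rule reqE)
  have ec: "e \<in> carrier G" using V_carr[OF e(1)] .
  have BP: "B' \<otimes> P = Bm \<otimes> inv e" using e(2) cA Pc ec by (simp add: m_assoc)
  define r4 where "r4 = cj G C' (inv e) \<otimes> r2"
  have r4V: "r4 \<in> V 2" unfolding r4_def using V_mult[OF V_conj[OF C'S V_inv[OF e(1)]] r2V] .
  have "(B' \<otimes> P) \<otimes> (C' \<otimes> r2) = Bm \<otimes> (C' \<otimes> r4)"
    unfolding BP r4_def using Bmc ec cA r2c by (simp add: cj_def m_assoc)
  then have z3: "z = (A' \<otimes> T) \<otimes> (Bm \<otimes> (C' \<otimes> r4))" using z1 z2 by simp
  obtain \<omega>3 where w3: "\<forall>i j. \<omega>3 i j \<in> S" "Cf \<omega>'' \<otimes> r4 = Cf \<omega>3"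
    using absorb[of \<omega>'' r4, OF w''S r4V] by blast
  define \<alpha> where "\<alpha> = \<alpha>'(m - 1 := a)"
  have Aeq: "Aform G x \<alpha> m = A' \<otimes> T"
  proof -
    obtain n0 where mn: "m = Suc n0" using m_pos by (cases m) auto
    have mm: "m - 1 = n0" using mn by simp
    have u: "[0..<m] = [0..<n0] @ [n0]" using mn by simp
    have "Aform G x \<alpha> m = oprod G (\<lambda>i. x i [^] \<alpha> i) [0..<n0] \<otimes> oprod G (\<lambda>i. x i [^] \<alpha> i) [n0]"
      unfolding Aform_def u by (rule oprod_append) (use x_carr mn in auto)
    also have "oprod G (\<lambda>i. x i [^] \<alpha> i) [0..<n0] = A'"
      unfolding A'_def Aform_def mm \<alpha>_def by (intro oprod_cong) simp
    also have "oprod G (\<lambda>i. x i [^] \<alpha> i) [n0] = T"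
      unfolding T_def t_def \<alpha>_def mm using x_carr mn by simp
    finally show ?thesis .
  qed
  have Ceq: "Cform G x \<omega>3 m = Cf \<omega>3" unfolding Cform_def Cf_def cterm_def Lp_def ..
  have "z = Aform G x \<alpha> m \<otimes> (Bform G x \<beta> m \<otimes> Cform G x \<omega>3 m)"
    using z3 Aeq Ceq w3(2) C'eq unfolding Bm_def by simp
  moreover have "\<forall>i j. \<omega>3 i j \<in> generate G (x ` {..<m})" using w3(1) unfolding S_def .
  ultimately show ?thesis unfolding Form_def by blast
qed

end

lemma rfg_mono: "rfg G x M \<Longrightarrow> m \<le> M \<Longrightarrow> rfg G x m"
  unfolding rfg_def rfg_axioms_def by auto

lemma (in group) generate_empty: "z \<in> generate G {} \<Longrightarrow> z = \<one>"
  by (induct rule: generate.induct) auto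

lemma Form_all:
  assumes "rfg G x M"
  shows "m \<le> M \<Longrightarrow> z \<in> generate G (x ` {..<m}) \<Longrightarrow> Form G x m z"
proof (induct m arbitrary: z)
  case 0
  interpret group G using assms unfolding rfg_def by blast
  have z1: "z = \<one>\<^bsub>G\<^esub>" using 0 generate_empty by simp
  have "z = Aform G x (\<lambda>_. 0) 0 \<otimes>\<^bsub>G\<^esub> (Bform G x (\<lambda>_ _. 0) 0 \<otimes>\<^bsub>G\<^esub> Cform G x (\<lambda>_ _. \<one>\<^bsub>G\<^esub>) 0)"
    using z1 by (simp add: Aform_def Bform_def Cform_def)
  moreover have "\<forall>i j. (\<lambda>_ _. \<one>\<^bsub>G\<^esub>) i j \<in> generate G (x ` {..<0})" by (simp add: generate.one)
  ultimately show ?case unfolding Form_def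
    by (intro exI[where x="\<lambda>_. (0::int)"] exI[where x="\<lambda>_ _. (0::int)"] exI[where x="\<lambda>_ _. \<one>\<^bsub>G\<^esub>"] conjI)
next
  case (Suc m)
  have r: "rfg G x (Suc m)" using rfg_mono[OF assms Suc(2)] .
  interpret rfs G x "Suc m"
    by (rule rfs.intro[OF r]) (unfold_locales, simp)
  show ?case
  proof (rule step)
    fix h assume "h \<in> generate G (x ` {..<Suc m - 1})"
    then show "Form G x (Suc m - 1) h" using Suc(1)[of h] Suc(2) by simp
  next
    show "z \<in> S" using Suc(3) unfolding S_def .
  qed
qed

theorem theorem5p1:
  fixes m :: nat and z :: "letter list set"
  assumes "z \<in> carrier (RF m)"
  shows "\<exists>(\<alpha> :: nat \<Rightarrow> int) (\<beta> :: nat \<Rightarrow> nat \<Rightarrow> int) \<omega>.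
           (\<forall>i j. \<omega> i j \<in> carrier (RF m)) \<and>
           z = oprod (RF m) (\<lambda>i. rf_gen m i [^]\<^bsub>RF m\<^esub> \<alpha> i) [0..<m]
               \<otimes>\<^bsub>RF m\<^esub>
               (oprod (RF m) (\<lambda>(i, j). gcomm (RF m) (rf_gen m j) (rf_gen m i) [^]\<^bsub>RF m\<^esub> \<beta> i j)
                  [(i, j). i \<leftarrow> [0..<m], j \<leftarrow> [i..<m]]
               \<otimes>\<^bsub>RF m\<^esub>
                oprod (RF m) (\<lambda>(i, j). gcomm (RF m) (gcomm (RF m) (\<omega> i j) (rf_gen m i)) (rf_gen m j))
                  [(i, j). i \<leftarrow> [0..<m - 1], j \<leftarrow> [0..<m - 1]])"
proof -
  have r: "rfg (RF m) (rf_gen m) m"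
    unfolding rfg_def rfg_axioms_def using RF_group RF_gen_carrier RF_rel by blast
  have "Form (RF m) (rf_gen m) m z"
    using Form_all[OF r, of m z] assms RF_generated[of m] by simp
  then show ?thesis unfolding Form_def Aform_def Bform_def Cform_def RF_generated[of m, symmetric] .
qed



end
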